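(* Let $X$ be a centered Gaussian random vector in a separable Hilbert space $(H,\langle\cdot,\cdot\rangle)$ with ${\mathbb E}\|X\|^2<\infty$ whose covariance operator $C_X y={\mathbb E}(\langle y,X\rangle X)$ has infinitely many nonzero eigenvalues $\lambda_1\ge\lambda_2\ge\dots>0$ with corresponding orthonormal eigenvectors $(u_j)_{j\ge1}$, so that $X=\sum_{j\ge1}\lambda_j^{1/2}Z_ju_j$ with $Z_j:=\langle X,u_j\rangle/\lambda_j^{1/2}$ i.i.d. $N(0,1)$. Let $n\ge1$ and let $m,l,n_1,\dots,n_m\in{\mathbb N}$ with $\prod_{j=1}^m n_j\le n$. For $j=1,\dots,m$ let $Z^{(j)}:=(Z_{(j-1)l+1},\dots,Z_{jl})$, let $\alpha_j\subset{\mathbb R}^l$ be an $L^2$-optimal $n_j$-quantizer for $Z^{(j)}$ (with respect to the Euclidean norm), let $\widehat{Z^{(j)}}=\sum_{b\in\alpha_j}b\,\mathbf 1_{C_b(\alpha_j)}(Z^{(j)})$ be a Voronoi $\alpha_j$-quantization of $Z^{(j)}$, and set \[\hat X^n:=\sum_{j=1}^m\sum_{k=1}^l\lambda^{1/2}_{(j-1)l+k}(\widehat{Z^{(j)}})_k\,u_{(j-1)l+k}.\] Then \[{\mathbb E}\|X-\hat X^n\|^2\le\sum_{j=1}^m\lambda_{(j-1)l+1}\,e_{n_j}(N(0,I_l))^2+\sum_{j\ge ml+1}\lambda_j.\] Moreover, this inequality is an equality if $l=1$ (or if $\lambda_{(j-1)l+1}=\dots=\lambda_{jl}$ for every $j$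).
   Context: For a random vector $Y$ in ${\mathbb R}^d$ (Euclidean norm) or in $H$ with finite second moment, $e_k(Y):=\inf\{({\mathbb E}\min_{a\in\alpha}\|Y-a\|^2)^{1/2}:\mathrm{card}(\alpha)\le k\}$, and $e_k(N(0,I_l))$ denotes this quantity for a standard normal vector in ${\mathbb R}^l$. An $L^2$-optimal $k$-quantizer for $Y$ is a set $\alpha$ with $\mathrm{card}(\alpha)\le k$ attaining this infimum. A Voronoi partition $\{C_b(\alpha):b\in\alpha\}$ is a Borel partition with $C_b(\alpha)\subset\{x:\|x-b\|=\min_{c\in\alpha}\|x-c\|\}$. *)

theory Defs
  imports "HOL-Probability.Probability"
begin

text \<open>Points of R^l are represented as functions nat => real, of which only the
  coordinates 0..l-1 matter (coordinate k of the paper, k = 1..l, is index k-1).\<close>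

definition sqdist_l :: "nat \<Rightarrow> (nat \<Rightarrow> real) \<Rightarrow> (nat \<Rightarrow> real) \<Rightarrow> real" where
  "sqdist_l l x y = (\<Sum>k<l. (x k - y k)^2)"

text \<open>Squared distance of x to a codebook alpha (infinite for the empty codebook).\<close>
definition mindist_l :: "nat \<Rightarrow> (nat \<Rightarrow> real) set \<Rightarrow> (nat \<Rightarrow> real) \<Rightarrow> ennreal" where
  "mindist_l l \<alpha> x = (INF a\<in>\<alpha>. ennreal (sqdist_l l x a))"

definition qdistortion :: "'w measure \<Rightarrow> nat \<Rightarrow> ('w \<Rightarrow> nat \<Rightarrow> real) \<Rightarrow> (nat \<Rightarrow> real) set \<Rightarrow> ennreal" where
  "qdistortion M l Y \<alpha> = (\<integral>\<^sup>+ w. mindist_l l \<alpha> (Y w) \<partial>M)"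

definition qerr_sq :: "'w measure \<Rightarrow> nat \<Rightarrow> ('w \<Rightarrow> nat \<Rightarrow> real) \<Rightarrow> nat \<Rightarrow> ennreal" where
  "qerr_sq M l Y k = (INF \<alpha>\<in>{\<alpha>. finite \<alpha> \<and> card \<alpha> \<le> k}. qdistortion M l Y \<alpha>)"

definition L2_optimal_quantizer ::
  "'w measure \<Rightarrow> nat \<Rightarrow> ('w \<Rightarrow> nat \<Rightarrow> real) \<Rightarrow> nat \<Rightarrow> (nat \<Rightarrow> real) set \<Rightarrow> bool" where
  "L2_optimal_quantizer M l Y k \<alpha> \<longleftrightarrow>
     finite \<alpha> \<and> card \<alpha> \<le> k \<and> qdistortion M l Y \<alpha> = qerr_sq M l Y k"

definition borel_l :: "nat \<Rightarrow> (nat \<Rightarrow> real) measure" where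
  "borel_l l = PiM {..<l} (\<lambda>_. lborel)"

definition std_gauss_l :: "nat \<Rightarrow> (nat \<Rightarrow> real) measure" where
  "std_gauss_l l = PiM {..<l} (\<lambda>_. density lborel (\<lambda>x. ennreal (std_normal_density x)))"

definition voronoi_partition :: "nat \<Rightarrow> (nat \<Rightarrow> real) set \<Rightarrow> ((nat \<Rightarrow> real) \<Rightarrow> (nat \<Rightarrow> real) set) \<Rightarrow> bool" where
  "voronoi_partition l \<alpha> C \<longleftrightarrow>
     (\<forall>b\<in>\<alpha>. C b \<in> sets (borel_l l)) \<and>
     disjoint_family_on C \<alpha> \<and>
     (\<Union>b\<in>\<alpha>. C b) = space (borel_l l) \<and>
     (\<forall>b\<in>\<alpha>. C b \<subseteq> {x. \<forall>c\<in>\<alpha>. sqdist_l l x b \<le> sqdist_l l x c})"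

definition voronoi_quant :: "(nat \<Rightarrow> real) set \<Rightarrow> ((nat \<Rightarrow> real) \<Rightarrow> (nat \<Rightarrow> real) set) \<Rightarrow> (nat \<Rightarrow> real) \<Rightarrow> nat \<Rightarrow> real" where
  "voronoi_quant \<alpha> C y = (\<lambda>k. \<Sum>b\<in>\<alpha>. indicator (C b) y * b k)"

definition centered_gaussian :: "'w measure \<Rightarrow> ('w \<Rightarrow> 'h::real_inner) \<Rightarrow> bool" where
  "centered_gaussian M X \<longleftrightarrow>
     (\<forall>y. (\<exists>\<sigma>>0. distributed M lborel (\<lambda>w. y \<bullet> X w) (\<lambda>x. ennreal (normal_density 0 \<sigma> x)))
          \<or> (AE w in M. y \<bullet> X w = 0))"

definition cov_op :: "'w measure \<Rightarrow> ('w \<Rightarrow> 'h::{real_inner,banach,second_countable_topology}) \<Rightarrow> 'h \<Rightarrow> 'h" where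
  "cov_op M X y = (\<integral> w. (y \<bullet> X w) *\<^sub>R X w \<partial>M)"

end

theory Submission
  imports Defs
begin

lemma fourier_1d_real:
  fixes M :: "'a measure" and Z :: "'a \<Rightarrow> real" and h :: "'a \<Rightarrow> real"
  assumes Z[measurable]: "Z \<in> borel_measurable M" and h: "integrable M h"
    and eq: "\<And>s. (\<integral>w. complex_of_real (h w) * iexp (s * Z w) \<partial>M) = 0"
    and E[measurable]: "E \<in> sets borel"
  shows "(\<integral>w. h w * indicator E (Z w) \<partial>M) = 0"
proof -
  define hp where "hp w = max 0 (h w)" for w
  define hn where "hn w = max 0 (- h w)" for w
  have hm[measurable]: "h \<in> borel_measurable M" using h by auto
  have hpm[measurable]: "hp \<in> borel_measurable M" "hn \<in> borel_measurable M"
    unfolding hp_def hn_def by auto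
  have ihp: "integrable M hp" "integrable M hn"
    unfolding hp_def hn_def using h by auto
  have hpn: "h w = hp w - hn w" for w unfolding hp_def hn_def by auto
  have nn: "0 \<le> hp w" "0 \<le> hn w" for w unfolding hp_def hn_def by auto
  have intc: "integrable M (\<lambda>w. complex_of_real (f w) * iexp (s * Z w))"
    if "integrable M f" "f \<in> borel_measurable M" for f s
    apply (rule Bochner_Integration.integrable_bound[where f=f])
    using that by (auto simp: norm_mult)
  have eq2: "(\<integral>w. complex_of_real (hp w) * iexp (s * Z w) \<partial>M)
           = (\<integral>w. complex_of_real (hn w) * iexp (s * Z w) \<partial>M)" for s
  proof -
    have "(\<integral>w. complex_of_real (hp w) * iexp (s * Z w) \<partial>M)
           - (\<integral>w. complex_of_real (hn w) * iexp (s * Z w) \<partial>M)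
          = (\<integral>w. complex_of_real (hp w) * iexp (s * Z w) - complex_of_real (hn w) * iexp (s * Z w) \<partial>M)"
      using intc ihp hpm by (subst Bochner_Integration.integral_diff) auto
    also have "\<dots> = (\<integral>w. complex_of_real (h w) * iexp (s * Z w) \<partial>M)"
      by (intro Bochner_Integration.integral_cong) (auto simp: hpn algebra_simps)
    finally show ?thesis using eq[of s] by simp
  qed
  have c_eq: "(\<integral>w. hp w \<partial>M) = (\<integral>w. hn w \<partial>M)"
  proof -
    have "complex_of_real (\<integral>w. hp w \<partial>M) = complex_of_real (\<integral>w. hn w \<partial>M)"
      using eq2[of 0] by simp
    then show ?thesis by simp
  qed
  define c where "c = (\<integral>w. hp w \<partial>M)"
  have c0: "c \<ge> 0" unfolding c_def using nn by auto
  have key: "(\<integral>w. hp w * indicator E (Z w) \<partial>M) = (\<integral>w. hn w * indicator E (Z w) \<partial>M)"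
  proof (cases "c = 0")
    case True
    have "AE w in M. hp w = 0"
      using True ihp nn unfolding c_def by (subst integral_nonneg_eq_0_iff_AE[symmetric]) auto
    moreover have "AE w in M. hn w = 0"
      using True ihp nn c_eq unfolding c_def by (subst integral_nonneg_eq_0_iff_AE[symmetric]) auto
    ultimately have "(\<integral>w. hp w * indicator E (Z w) \<partial>M) = 0" "(\<integral>w. hn w * indicator E (Z w) \<partial>M) = 0"
      by (auto intro!: integral_eq_zero_AE elim: AE_mp)
    then show ?thesis by simp
  next
    case False
    then have cpos: "c > 0" using c0 by simp
    define Dp where "Dp = distr (density M (\<lambda>w. ennreal (hp w / c))) borel Z"
    define Dn where "Dn = distr (density M (\<lambda>w. ennreal (hn w / c))) borel Z"
    have intg: "(\<integral>x. f x \<partial>distr (density M (\<lambda>w. ennreal (g w / c))) borel Z)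
        = (\<integral>w. (g w / c) *\<^sub>R f (Z w) \<partial>M)"
      if [measurable]: "g \<in> borel_measurable M" "f \<in> borel_measurable borel" "\<And>w. 0 \<le> g w"
      for f :: "real \<Rightarrow> 'b::{banach,second_countable_topology}" and g
    proof -
      have "(\<integral>x. f x \<partial>distr (density M (\<lambda>w. ennreal (g w / c))) borel Z)
          = (\<integral>w. f (Z w) \<partial>density M (\<lambda>w. ennreal (g w / c)))"
        by (subst integral_distr) auto
      also have "\<dots> = (\<integral>w. (g w / c) *\<^sub>R f (Z w) \<partial>M)"
        using cpos that by (subst integral_density) auto
      finally show ?thesis .
    qed
    have rd: "real_distribution (distr (density M (\<lambda>w. ennreal (g w / c))) borel Z)"
      if [measurable]: "g \<in> borel_measurable M" "\<And>w. 0 \<le> g w" "integrable M g" "(\<integral>w. g w \<partial>M) = c" for g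
    proof -
      have "emeasure (density M (\<lambda>w. ennreal (g w / c))) (space M) = (\<integral>\<^sup>+w. ennreal (g w / c) \<partial>M)"
        by (subst emeasure_density) auto
      also have "\<dots> = ennreal (\<integral>w. g w / c \<partial>M)"
        using that cpos by (intro nn_integral_eq_integral) auto
      also have "\<dots> = 1" using that cpos by simp
      finally have "prob_space (density M (\<lambda>w. ennreal (g w / c)))"
        by (intro prob_spaceI) auto
      then show ?thesis
        unfolding real_distribution_def real_distribution_axioms_def
        by (auto intro: prob_space.prob_space_distr)
    qed
    have "char Dp = char Dn"
    proof
      fix s
      have "char Dp s = (\<integral>w. (hp w / c) *\<^sub>R iexp (s * Z w) \<partial>M)"
        unfolding char_def Dp_def using nn by (subst intg) auto
      also have "\<dots> = (\<integral>w. complex_of_real (1/c) * (complex_of_real (hp w) * iexp (s * Z w)) \<partial>M)"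
        by (intro Bochner_Integration.integral_cong) (auto simp: scaleR_conv_of_real)
      also have "\<dots> = complex_of_real (1/c) * (\<integral>w. complex_of_real (hp w) * iexp (s * Z w) \<partial>M)"
        by simp
      also have "\<dots> = complex_of_real (1/c) * (\<integral>w. complex_of_real (hn w) * iexp (s * Z w) \<partial>M)"
        using eq2 by simp
      also have "\<dots> = (\<integral>w. complex_of_real (1/c) * (complex_of_real (hn w) * iexp (s * Z w)) \<partial>M)"
        by simp
      also have "\<dots> = (\<integral>w. (hn w / c) *\<^sub>R iexp (s * Z w) \<partial>M)"
        by (intro Bochner_Integration.integral_cong) (auto simp: scaleR_conv_of_real)
      also have "\<dots> = char Dn s"
        unfolding char_def Dn_def using nn by (subst intg) auto
      finally show "char Dp s = char Dn s" .
    qed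
    then have "Dp = Dn"
      unfolding Dp_def Dn_def using rd[of hp] rd[of hn] ihp nn c_eq unfolding c_def
      by (intro Levy_uniqueness) auto
    then have "(\<integral>x. indicator E x \<partial>Dp) = (\<integral>x. indicator E x \<partial>Dn :: real)" by simp
    then have "(\<integral>w. (hp w / c) *\<^sub>R indicator E (Z w) \<partial>M) = (\<integral>w. (hn w / c) *\<^sub>R indicator E (Z w) \<partial>M :: real)"
      unfolding Dp_def Dn_def using nn by (subst (asm) (1 2) intg) auto
    then have "(\<integral>w. (1/c) * (hp w * indicator E (Z w)) \<partial>M) = (\<integral>w. (1/c) * (hn w * indicator E (Z w)) \<partial>M)"
      by simp
    then show ?thesis using cpos by simp
  qed
  have "(\<integral>w. h w * indicator E (Z w) \<partial>M) = (\<integral>w. hp w * indicator E (Z w) - hn w * indicator E (Z w) \<partial>M)"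
    by (intro Bochner_Integration.integral_cong) (auto simp: hpn algebra_simps)
  also have "\<dots> = (\<integral>w. hp w * indicator E (Z w) \<partial>M) - (\<integral>w. hn w * indicator E (Z w) \<partial>M)"
  proof (rule Bochner_Integration.integral_diff)
    have b: "norm (g w * indicator E (Z w)) \<le> norm (g w)" for g :: "'a \<Rightarrow> real" and w
      by (cases "Z w \<in> E") auto
    note b' = b[simplified]
    show "integrable M (\<lambda>w. hp w * indicator E (Z w))"
      by (rule Bochner_Integration.integrable_bound[OF ihp(1)]) (auto simp: b')
    show "integrable M (\<lambda>w. hn w * indicator E (Z w))"
      by (rule Bochner_Integration.integrable_bound[OF ihp(2)]) (auto simp: b')
  qed
  finally show ?thesis using key by simp
qed


lemma fourier_1d_re:
  fixes M :: "'a measure" and Z :: "'a \<Rightarrow> real" and h :: "'a \<Rightarrow> complex"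
  assumes Z[measurable]: "Z \<in> borel_measurable M" and h: "integrable M h"
    and eq: "\<And>s. (\<integral>w. h w * iexp (s * Z w) \<partial>M) = 0"
    and E[measurable]: "E \<in> sets borel"
  shows "(\<integral>w. Re (h w) * indicator E (Z w) \<partial>M) = 0"
proof (rule fourier_1d_real[OF Z _ _ E])
  have hm[measurable]: "h \<in> borel_measurable M" using h by auto
  show "integrable M (\<lambda>w. Re (h w))" using h by auto
  have ie: "integrable M (\<lambda>w. h w * iexp (s * Z w))" for s
    by (rule Bochner_Integration.integrable_bound[OF h]) (auto simp: norm_mult)
  fix s
  have "(\<integral>w. complex_of_real (Re (h w)) * iexp (s * Z w) \<partial>M)
      = (\<integral>w. (h w * iexp (s * Z w) + cnj (h w * iexp (-s * Z w))) / 2 \<partial>M)"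
  proof (intro Bochner_Integration.integral_cong refl)
    fix w
    have c: "cnj (iexp (-s * Z w)) = iexp (s * Z w)"
      by (subst exp_cnj) simp
    have r: "complex_of_real (Re (h w)) = (h w + cnj (h w)) / 2"
      by (simp add: complex_add_cnj)
    show "complex_of_real (Re (h w)) * iexp (s * Z w)
      = (h w * iexp (s * Z w) + cnj (h w * iexp (-s * Z w))) / 2"
      by (simp only: complex_cnj_mult c r) (simp add: field_simps)
  qed
  also have "\<dots> = (\<integral>w. h w * iexp (s * Z w) + cnj (h w * iexp (-s * Z w)) \<partial>M) / 2"
    by (rule integral_divide_zero)
  also have "\<dots> = ((\<integral>w. h w * iexp (s * Z w) \<partial>M) + (\<integral>w. cnj (h w * iexp (-s * Z w)) \<partial>M)) / 2"
    using ie[of s] integrable_cnj[OF ie[of "-s"]] by (subst Bochner_Integration.integral_add) auto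
  also have "\<dots> = ((\<integral>w. h w * iexp (s * Z w) \<partial>M) + cnj (\<integral>w. h w * iexp (-s * Z w) \<partial>M)) / 2"
    using Bochner_Integration.integral_cnj[of M "\<lambda>w. h w * iexp (-s * Z w)"] by simp
  also have "\<dots> = 0" using eq[of s] eq[of "-s"] by simp
  finally show "(\<integral>w. complex_of_real (Re (h w)) * iexp (s * Z w) \<partial>M) = 0" .
qed

lemma fourier_1d:
  fixes M :: "'a measure" and Z :: "'a \<Rightarrow> real" and h :: "'a \<Rightarrow> complex"
  assumes Z[measurable]: "Z \<in> borel_measurable M" and h: "integrable M h"
    and eq: "\<And>s. (\<integral>w. h w * iexp (s * Z w) \<partial>M) = 0"
    and E[measurable]: "E \<in> sets borel"
  shows "(\<integral>w. h w * indicator E (Z w) \<partial>M) = 0"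
proof -
  have hm[measurable]: "h \<in> borel_measurable M" using h by auto
  have r1: "(\<integral>w. Re (h w) * indicator E (Z w) \<partial>M) = 0"
    by (rule fourier_1d_re[OF Z h eq E])
  have r2: "(\<integral>w. Re (- \<i> * h w) * indicator E (Z w) \<partial>M) = 0"
  proof (rule fourier_1d_re[OF Z _ _ E])
    show "integrable M (\<lambda>w. - \<i> * h w)" using h by auto
    fix s
    have "(\<integral>w. - \<i> * h w * iexp (s * Z w) \<partial>M) = - \<i> * (\<integral>w. h w * iexp (s * Z w) \<partial>M)"
      by (simp add: mult.assoc)
    then show "(\<integral>w. - \<i> * h w * iexp (s * Z w) \<partial>M) = 0" using eq[of s] by simp
  qed
  have b1: "\<bar>Re (h w) * indicator E (Z w)\<bar> \<le> \<bar>Re (h w)\<bar>" for w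
    by (cases "Z w \<in> E") auto
  have b2: "\<bar>Im (h w) * indicator E (Z w)\<bar> \<le> \<bar>Im (h w)\<bar>" for w
    by (cases "Z w \<in> E") auto
  have i1: "integrable M (\<lambda>w. Re (h w) * indicator E (Z w))"
    by (rule Bochner_Integration.integrable_bound[of _ "\<lambda>w. Re (h w)"]) (use h b1 b2 in \<open>auto\<close>)
  have i2: "integrable M (\<lambda>w. Im (h w) * indicator E (Z w))"
    by (rule Bochner_Integration.integrable_bound[of _ "\<lambda>w. Im (h w)"]) (use h b1 b2 in \<open>auto\<close>)
  have "(\<integral>w. h w * indicator E (Z w) \<partial>M)
     = (\<integral>w. complex_of_real (Re (h w) * indicator E (Z w)) + \<i> * complex_of_real (Im (h w) * indicator E (Z w)) \<partial>M)"
  proof (intro Bochner_Integration.integral_cong refl)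
    fix w show "h w * indicator E (Z w) = complex_of_real (Re (h w) * indicator E (Z w)) + \<i> * complex_of_real (Im (h w) * indicator E (Z w))"
      by (cases "Z w \<in> E") (auto simp: complex_eq_iff)
  qed
  also have "\<dots> = complex_of_real (\<integral>w. Re (h w) * indicator E (Z w) \<partial>M)
        + \<i> * complex_of_real (\<integral>w. Im (h w) * indicator E (Z w) \<partial>M)"
    using i1 i2 by (subst Bochner_Integration.integral_add)
      (auto simp only: complex_of_real_integrable_eq integrable_mult_right integral_mult_right_zero integral_complex_of_real)
  also have "\<dots> = 0" using r1 r2 by simp
  finally show ?thesis .
qed


lemma integrable_mult_ind_c:
  fixes g :: "'a \<Rightarrow> complex"
  assumes "integrable M g" "(\<lambda>w. indicator X (Y w) :: complex) \<in> borel_measurable M"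
  shows "integrable M (\<lambda>w. g w * indicator X (Y w))"
proof (rule Bochner_Integration.integrable_bound[OF assms(1)])
  show "(\<lambda>w. g w * indicator X (Y w)) \<in> borel_measurable M" using assms by auto
  show "AE x in M. norm (g x * indicator X (Y x)) \<le> norm (g x)"
  proof (rule AE_I2)
    fix x show "norm (g x * indicator X (Y x)) \<le> norm (g x)" by (cases "Y x \<in> X") auto
  qed
qed

lemma fourier_PiM:
  fixes I :: "'i set"
  assumes "finite I"
  shows "\<And>(M::'a measure) (Y::'a \<Rightarrow> 'i \<Rightarrow> real) (g::'a \<Rightarrow> complex) (A :: ('i \<Rightarrow> real) set).
     Y \<in> M \<rightarrow>\<^sub>M PiM I (\<lambda>_. lborel :: real measure) \<Longrightarrow> integrable M g \<Longrightarrow>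
     (\<And>t. (\<integral>w. g w * iexp (\<Sum>k\<in>I. t k * Y w k) \<partial>M) = 0) \<Longrightarrow> A \<in> sets (PiM I (\<lambda>_. lborel :: real measure)) \<Longrightarrow>
     (\<integral>w. g w * indicator A (Y w) \<partial>M) = 0"
using assms proof (induction I rule: finite_induct)
  case empty
  fix M :: "'a measure" and Y :: "'a \<Rightarrow> 'i \<Rightarrow> real" and g :: "'a \<Rightarrow> complex" and A :: "('i \<Rightarrow> real) set"
  assume Y: "Y \<in> M \<rightarrow>\<^sub>M PiM ({}::'i set) (\<lambda>_. lborel :: real measure)" and g: "integrable M g"
    and hyp: "\<And>t. (\<integral>w. g w * iexp (\<Sum>k\<in>({}::'i set). t k * Y w k) \<partial>M) = 0"
    and A: "A \<in> sets (PiM ({}::'i set) (\<lambda>_. lborel :: real measure))"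
  have Yw: "Y w = (\<lambda>k. undefined)" if "w \<in> space M" for w
    using measurable_space[OF Y that] by (simp add: space_PiM_empty)
  have g0: "(\<integral>w. g w \<partial>M) = 0" using hyp[of "\<lambda>_. 0"] by simp
  from A have "A = {} \<or> A = {\<lambda>k. undefined}" by (simp add: sets_PiM_empty)
  then show "(\<integral>w. g w * indicator A (Y w) \<partial>M) = 0"
  proof
    assume "A = {}" then show ?thesis by simp
  next
    assume A1: "A = {\<lambda>k. undefined}"
    have "(\<integral>w. g w * indicator A (Y w) \<partial>M) = (\<integral>w. g w \<partial>M)"
      by (intro Bochner_Integration.integral_cong refl) (simp add: A1 Yw)
    then show ?thesis using g0 by simp
  qed
next
  case (insert i I)
  fix M :: "'a measure" and Y :: "'a \<Rightarrow> 'i \<Rightarrow> real" and g :: "'a \<Rightarrow> complex" and A :: "('i \<Rightarrow> real) set"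
  assume Y: "Y \<in> M \<rightarrow>\<^sub>M PiM (insert i I) (\<lambda>_. lborel :: real measure)" and g: "integrable M g"
    and hyp: "\<And>t. (\<integral>w. g w * iexp (\<Sum>k\<in>insert i I. t k * Y w k) \<partial>M) = 0"
    and A: "A \<in> sets (PiM (insert i I) (\<lambda>_. lborel :: real measure))"
  define J where "J = insert i I"
  define YI where "YI w = restrict (Y w) I" for w
  have gm[measurable]: "g \<in> borel_measurable M" using g by auto
  have YIm: "YI \<in> M \<rightarrow>\<^sub>M PiM I (\<lambda>_. lborel :: real measure)"
    unfolding YI_def by (rule measurable_compose[OF Y measurable_restrict_subset]) auto
  have Yim0: "(\<lambda>w. Y w i) \<in> M \<rightarrow>\<^sub>M lborel"
    by (rule measurable_compose[OF Y measurable_component_singleton]) auto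
  then have Yim[measurable]: "(\<lambda>w. Y w i) \<in> borel_measurable M" by simp
  have indm: "(\<lambda>w. indicator X (Z w) :: complex) \<in> borel_measurable M"
    if "Z \<in> M \<rightarrow>\<^sub>M N" "X \<in> sets N" for Z N X
    by (rule measurable_compose[OF that(1)]) (use that(2) in auto)
  have c1: "(\<integral>w. (g w * iexp (s * Y w i)) * indicator B (YI w) \<partial>M) = 0"
    if B: "B \<in> sets (PiM I (\<lambda>_. lborel :: real measure))" for s B
  proof (rule insert.IH[OF YIm _ _ B])
    show "integrable M (\<lambda>w. g w * iexp (s * Y w i))"
      by (rule Bochner_Integration.integrable_bound[OF g]) (auto simp: norm_mult)
    fix t
    have "(\<integral>w. g w * iexp (s * Y w i) * iexp (\<Sum>k\<in>I. t k * YI w k) \<partial>M)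
        = (\<integral>w. g w * iexp (\<Sum>k\<in>insert i I. (t(i:=s)) k * Y w k) \<partial>M)"
    proof (intro Bochner_Integration.integral_cong refl)
      fix w
      have "(\<Sum>k\<in>insert i I. (t(i:=s)) k * Y w k) = s * Y w i + (\<Sum>k\<in>I. t k * YI w k)"
        using insert.hyps by (simp add: YI_def) (intro sum.cong, auto)
      then show "g w * iexp (s * Y w i) * iexp (\<Sum>k\<in>I. t k * YI w k)
          = g w * iexp (\<Sum>k\<in>insert i I. (t(i:=s)) k * Y w k)"
        by (simp add: distrib_left exp_add mult.assoc)
    qed
    then show "(\<integral>w. g w * iexp (s * Y w i) * iexp (\<Sum>k\<in>I. t k * YI w k) \<partial>M) = 0"
      using hyp[of "t(i:=s)"] by simp
  qed
  have c2: "(\<integral>w. (g w * indicator B (YI w)) * indicator E (Y w i) \<partial>M) = 0"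
    if B: "B \<in> sets (PiM I (\<lambda>_. lborel :: real measure))" and E: "E \<in> sets borel" for E B
  proof (rule fourier_1d[OF Yim _ _ E])
    show "integrable M (\<lambda>w. g w * indicator B (YI w))"
      by (rule integrable_mult_ind_c[OF g indm[OF YIm B]])
    fix s
    have "(\<integral>w. g w * indicator B (YI w) * iexp (s * Y w i) \<partial>M)
        = (\<integral>w. (g w * iexp (s * Y w i)) * indicator B (YI w) \<partial>M)"
      by (intro Bochner_Integration.integral_cong refl) (simp add: mult_ac)
    then show "(\<integral>w. g w * indicator B (YI w) * iexp (s * Y w i) \<partial>M) = 0"
      using c1[OF B] by simp
  qed
  define \<Omega> where "\<Omega> = (\<Pi>\<^sub>E k\<in>J. space ((\<lambda>_. lborel :: real measure) k))"
  have Yw: "Y w \<in> \<Omega>" if "w \<in> space M" for w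
    using measurable_space[OF Y that] by (simp add: \<Omega>_def J_def space_PiM)
  have g0: "(\<integral>w. g w \<partial>M) = 0" using hyp[of "\<lambda>_. 0"] by simp
  have sets_eq: "sets (PiM J (\<lambda>_. lborel :: real measure)) = sigma_sets \<Omega> (prod_algebra J (\<lambda>_. lborel :: real measure))"
    unfolding \<Omega>_def by (rule sets_PiM)
  have A': "A \<in> sigma_sets \<Omega> (prod_algebra J (\<lambda>_. lborel :: real measure))" using A sets_eq J_def by simp
  show "(\<integral>w. g w * indicator A (Y w) \<partial>M) = 0"
  proof (rule sigma_sets_induct_disjoint[OF Int_stable_prod_algebra _ A'])
    show "prod_algebra J (\<lambda>_. lborel :: real measure) \<subseteq> Pow \<Omega>"
      unfolding \<Omega>_def by (rule prod_algebra_sets_into_space)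
  next
    fix X assume "X \<in> prod_algebra J (\<lambda>_. lborel :: real measure)"
    then obtain E where XE: "X = Pi\<^sub>E J E" and E: "E \<in> (\<Pi> k\<in>J. sets (lborel :: real measure))"
      by (auto elim: prod_algebraE_all)
    have B: "Pi\<^sub>E I E \<in> sets (PiM I (\<lambda>_. lborel :: real measure))"
      using E insert.hyps by (intro sets_PiM_I_finite) (auto simp: J_def)
    have Ei: "E i \<in> sets borel" using E by (auto simp: J_def)
    have "(\<integral>w. g w * indicator X (Y w) \<partial>M) = (\<integral>w. (g w * indicator (Pi\<^sub>E I E) (YI w)) * indicator (E i) (Y w i) \<partial>M)"
    proof (intro Bochner_Integration.integral_cong refl)
      fix w assume w: "w \<in> space M"
      have ext: "Y w \<in> extensional J" using Yw[OF w] by (simp add: \<Omega>_def PiE_def)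
      have "Y w \<in> Pi\<^sub>E J E \<longleftrightarrow> Y w i \<in> E i \<and> YI w \<in> Pi\<^sub>E I E"
        using ext insert.hyps by (auto simp: YI_def J_def PiE_def Pi_def)
      then show "g w * indicator X (Y w) = (g w * indicator (Pi\<^sub>E I E) (YI w)) * indicator (E i) (Y w i)"
        unfolding XE by (cases "Y w i \<in> E i"; cases "YI w \<in> Pi\<^sub>E I E") auto
    qed
    also have "\<dots> = 0" by (rule c2[OF B Ei])
    finally show "(\<integral>w. g w * indicator X (Y w) \<partial>M) = 0" .
  next
    show "(\<integral>w. g w * indicator {} (Y w) \<partial>M) = 0" by simp
  next
    fix X assume X: "X \<in> sigma_sets \<Omega> (prod_algebra J (\<lambda>_. lborel :: real measure))"
      and P: "(\<integral>w. g w * indicator X (Y w) \<partial>M) = 0"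
    have Xs: "X \<in> sets (PiM (insert i I) (\<lambda>_. lborel :: real measure))" using X sets_eq J_def by simp
    have "(\<integral>w. g w * indicator (\<Omega> - X) (Y w) \<partial>M) = (\<integral>w. g w - g w * indicator X (Y w) \<partial>M)"
    proof (intro Bochner_Integration.integral_cong refl)
      fix w assume w: "w \<in> space M"
      show "g w * indicator (\<Omega> - X) (Y w) = g w - g w * indicator X (Y w)"
        using Yw[OF w] by (cases "Y w \<in> X") auto
    qed
    also have "\<dots> = (\<integral>w. g w \<partial>M) - (\<integral>w. g w * indicator X (Y w) \<partial>M)"
      by (rule Bochner_Integration.integral_diff[OF g integrable_mult_ind_c[OF g indm[OF Y Xs]]])
    also have "\<dots> = 0" using g0 P by simp
    finally show "(\<integral>w. g w * indicator (\<Omega> - X) (Y w) \<partial>M) = 0" .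
  next
    fix F :: "nat \<Rightarrow> _"
    assume disj: "disjoint_family F" and rng: "range F \<subseteq> sigma_sets \<Omega> (prod_algebra J (\<lambda>_. lborel :: real measure))"
      and P: "\<And>n. (\<integral>w. g w * indicator (F n) (Y w) \<partial>M) = 0"
    have Fs: "F n \<in> sets (PiM (insert i I) (\<lambda>_. lborel :: real measure))" for n using rng sets_eq J_def by auto
    have Us: "(\<Union>k\<in>K. F k) \<in> sets (PiM (insert i I) (\<lambda>_. lborel :: real measure))" if "countable K" for K
      using Fs that by (intro sets.countable_UN') auto
    have fin: "(\<integral>w. g w * indicator (\<Union>k\<in>{..<n}. F k) (Y w) \<partial>M) = 0" for n
    proof (induction n)
      case 0 then show ?case by simp
    next
      case (Suc n)
      have d: "(\<Union>k\<in>{..<n}. F k) \<inter> F n = {}"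
        using disj unfolding disjoint_family_on_def by (metis (no_types, lifting) UN_E disjoint_iff lessThan_iff less_irrefl UNIV_I)
      have "(\<integral>w. g w * indicator (\<Union>k\<in>{..<Suc n}. F k) (Y w) \<partial>M)
          = (\<integral>w. g w * indicator (\<Union>k\<in>{..<n}. F k) (Y w) + g w * indicator (F n) (Y w) \<partial>M)"
      proof (intro Bochner_Integration.integral_cong refl)
        fix w
        have "(\<Union>k\<in>{..<Suc n}. F k) = (\<Union>k\<in>{..<n}. F k) \<union> F n" by (auto simp: lessThan_Suc)
        then show "g w * indicator (\<Union>k\<in>{..<Suc n}. F k) (Y w)
            = g w * indicator (\<Union>k\<in>{..<n}. F k) (Y w) + g w * indicator (F n) (Y w)"
          using d by (cases "Y w \<in> F n"; cases "Y w \<in> (\<Union>k\<in>{..<n}. F k)") auto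
      qed
      also have "\<dots> = (\<integral>w. g w * indicator (\<Union>k\<in>{..<n}. F k) (Y w) \<partial>M) + (\<integral>w. g w * indicator (F n) (Y w) \<partial>M)"
        by (rule Bochner_Integration.integral_add[OF integrable_mult_ind_c[OF g indm[OF Y Us]] integrable_mult_ind_c[OF g indm[OF Y Fs]]]) simp
      also have "\<dots> = 0" using Suc.IH P[of n] by simp
      finally show ?case .
    qed
    have "(\<lambda>n. \<integral>w. g w * indicator (\<Union>k\<in>{..<n}. F k) (Y w) \<partial>M) \<longlonglongrightarrow> (\<integral>w. g w * indicator (\<Union> (range F)) (Y w) \<partial>M)"
    proof (rule integral_dominated_convergence[where w="\<lambda>w. norm (g w)"])
      show "(\<lambda>w. g w * indicator (\<Union> (range F)) (Y w)) \<in> borel_measurable M"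
        using indm[OF Y Us[of UNIV]] by simp
      show "(\<lambda>w. g w * indicator (\<Union>k\<in>{..<n}. F k) (Y w)) \<in> borel_measurable M" for n
        using indm[OF Y Us[of "{..<n}"]] by simp
      show "integrable M (\<lambda>w. norm (g w))" using g by simp
      show "AE w in M. (\<lambda>n. g w * indicator (\<Union>k\<in>{..<n}. F k) (Y w)) \<longlonglongrightarrow> g w * indicator (\<Union> (range F)) (Y w)"
        by (intro AE_I2 tendsto_mult tendsto_const LIMSEQ_indicator_UN)
      show "AE w in M. norm (g w * indicator (\<Union>k\<in>{..<n}. F k) (Y w)) \<le> norm (g w)" for n
      proof (rule AE_I2)
        fix w show "norm (g w * indicator (\<Union>k\<in>{..<n}. F k) (Y w)) \<le> norm (g w)"
          by (cases "Y w \<in> (\<Union>k\<in>{..<n}. F k)") auto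
      qed
    qed
    then show "(\<integral>w. g w * indicator (\<Union> (range F)) (Y w) \<partial>M) = 0"
      using fin by (simp add: LIMSEQ_const_iff)
  qed
qed


lemma law_eq_via_char:
  fixes M :: "'a measure" and V :: "'a \<Rightarrow> 'i \<Rightarrow> real" and I :: "'i set" and G :: "('i \<Rightarrow> real) measure"
  assumes fin: "finite I" and PM: "prob_space M" and PG: "prob_space G"
    and V: "V \<in> M \<rightarrow>\<^sub>M PiM I (\<lambda>_. lborel :: real measure)"
    and sG: "sets G = sets (PiM I (\<lambda>_. lborel :: real measure))"
    and ch: "\<And>t. (\<integral>w. iexp (\<Sum>k\<in>I. t k * V w k) \<partial>M) = (\<integral>x. iexp (\<Sum>k\<in>I. t k * x k) \<partial>G)"
  shows "distr M (PiM I (\<lambda>_. lborel :: real measure)) V = G"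
proof -
  define L where "L = PiM I (\<lambda>_. lborel :: real measure)"
  define P where "P = M \<Otimes>\<^sub>M G"
  define N where "N = P \<Otimes>\<^sub>M count_space (UNIV :: bool set)"
  define Y where "Y z = (if snd z then V (fst (fst z)) else snd (fst z))" for z :: "('a \<times> ('i \<Rightarrow> real)) \<times> bool"
  define h where "h z = (if snd z then 1 else -1 :: complex)" for z :: "('a \<times> ('i \<Rightarrow> real)) \<times> bool"
  interpret M: prob_space M by (rule PM)
  interpret G: prob_space G by (rule PG)
  have PP: "prob_space P" unfolding P_def by (rule prob_space_pair[OF PM PG])
  interpret P: prob_space P by (rule PP)
  have psf1: "pair_sigma_finite M G"
    unfolding pair_sigma_finite_def using PM PG by (auto intro: prob_space_imp_sigma_finite)
  have psf2: "pair_sigma_finite P (count_space (UNIV :: bool set))"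
    unfolding pair_sigma_finite_def using PP
    by (auto intro: prob_space_imp_sigma_finite sigma_finite_measure_count_space_finite)
  have finN: "finite_measure N" unfolding N_def
    by (intro finite_measure_pair_measure) (auto intro: finite_measureI simp: P.emeasure_space_1)
  have snd_m: "snd \<in> P \<rightarrow>\<^sub>M L"
  proof -
    have "measurable P G = measurable P L"
      by (rule measurable_cong_sets) (auto simp: sG L_def)
    then show ?thesis using measurable_snd[of M G] unfolding P_def by simp
  qed
  have fst_m: "(\<lambda>p. V (fst p)) \<in> P \<rightarrow>\<^sub>M L"
    unfolding P_def L_def by (rule measurable_compose[OF measurable_fst V])
  have Ym: "Y \<in> N \<rightarrow>\<^sub>M L"
    unfolding Y_def
  proof (rule measurable_If)
    show "(\<lambda>z. V (fst (fst z))) \<in> N \<rightarrow>\<^sub>M L"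
      unfolding N_def by (rule measurable_compose[OF measurable_fst fst_m])
    show "(\<lambda>z. snd (fst z)) \<in> N \<rightarrow>\<^sub>M L"
      unfolding N_def by (rule measurable_compose[OF measurable_fst snd_m])
    have "{x \<in> space N. snd x} = space P \<times> {True}"
      unfolding N_def by (auto simp: space_pair_measure)
    also have "\<dots> \<in> sets N" unfolding N_def by (intro pair_measureI) auto
    finally show "{x \<in> space N. snd x} \<in> sets N" .
  qed
  have hm[measurable]: "h \<in> borel_measurable N"
  proof -
    have "h = (\<lambda>z. (if snd z then 1 else -1 :: complex))" unfolding h_def by simp
    moreover have "(\<lambda>z. (if snd z then 1 else -1 :: complex)) \<in> borel_measurable N"
      unfolding N_def by (rule measurable_compose[OF measurable_snd]) auto
    ultimately show ?thesis by simp
  qed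
  have intN: "(\<integral>z. h z * f (Y z) \<partial>N) = (\<integral>w. f (V w) \<partial>M) - (\<integral>x. f x \<partial>G)"
    if fm: "f \<in> borel_measurable L" and fb: "\<And>x. norm (f x) \<le> 1" for f :: "('i \<Rightarrow> real) \<Rightarrow> complex"
  proof -
    have fYm: "(\<lambda>z. h z * f (Y z)) \<in> borel_measurable N"
      by (intro borel_measurable_times hm measurable_compose[OF Ym fm])
    have iN: "integrable N (\<lambda>z. h z * f (Y z))"
      by (rule finite_measure.integrable_const_bound[OF finN, where B=1])
         (use fYm in \<open>auto simp: norm_mult h_def fb\<close>)
    have fVm: "(\<lambda>p. f (V (fst p))) \<in> borel_measurable P" using measurable_compose[OF fst_m fm] .
    have fSm: "(\<lambda>p. f (snd p)) \<in> borel_measurable P" using measurable_compose[OF snd_m fm] .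
    have iP1: "integrable P (\<lambda>p. f (V (fst p)))"
      by (rule P.integrable_const_bound[where B=1]) (auto simp: fVm fb)
    have iP2: "integrable P (\<lambda>p. f (snd p))"
      by (rule P.integrable_const_bound[where B=1]) (auto simp: fSm fb)
    have "(\<integral>z. h z * f (Y z) \<partial>N) = (\<integral>p. (\<integral>b. h (p, b) * f (Y (p, b)) \<partial>count_space UNIV) \<partial>P)"
      unfolding N_def using pair_sigma_finite.integral_fst'[OF psf2 iN[unfolded N_def]] by simp
    also have "\<dots> = (\<integral>p. f (V (fst p)) - f (snd p) \<partial>P)"
      by (intro Bochner_Integration.integral_cong refl)
         (simp add: lebesgue_integral_count_space_finite UNIV_bool h_def Y_def)
    also have "\<dots> = (\<integral>p. f (V (fst p)) \<partial>P) - (\<integral>p. f (snd p) \<partial>P)"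
      by (rule Bochner_Integration.integral_diff[OF iP1 iP2])
    also have "(\<integral>p. f (V (fst p)) \<partial>P) = (\<integral>w. f (V w) \<partial>M)"
    proof -
      have "(\<integral>p. f (V (fst p)) \<partial>P) = (\<integral>w. (\<integral>x. f (V (fst (w, x))) \<partial>G) \<partial>M)"
        unfolding P_def using pair_sigma_finite.integral_fst'[OF psf1 iP1[unfolded P_def]] by simp
      also have "\<dots> = (\<integral>w. f (V w) \<partial>M)" by (simp add: G.prob_space)
      finally show ?thesis .
    qed
    also have "(\<integral>p. f (snd p) \<partial>P) = (\<integral>x. f x \<partial>G)"
    proof -
      have "(\<integral>p. f (snd p) \<partial>P) = (\<integral>w. (\<integral>x. f (snd (w, x)) \<partial>G) \<partial>M)"
        unfolding P_def using pair_sigma_finite.integral_fst'[OF psf1 iP2[unfolded P_def]] by simp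
      also have "\<dots> = (\<integral>x. f x \<partial>G)" by (simp add: M.prob_space)
      finally show ?thesis .
    qed
    finally show ?thesis .
  qed
  have hint: "integrable N h"
    by (rule finite_measure.integrable_const_bound[OF finN, where B=1]) (auto simp: h_def)
  have key: "(\<integral>z. h z * indicator A (Y z) \<partial>N) = 0" if A: "A \<in> sets L" for A
    unfolding L_def
  proof (rule fourier_PiM[OF fin Ym[unfolded L_def] hint])
    show "A \<in> sets (PiM I (\<lambda>_. lborel :: real measure))" using A unfolding L_def .
    fix t
    have m: "(\<lambda>x. iexp (\<Sum>k\<in>I. t k * x k)) \<in> borel_measurable L"
      unfolding L_def by measurable
    show "(\<integral>z. h z * iexp (\<Sum>k\<in>I. t k * Y z k) \<partial>N) = 0"
      using intN[OF m] ch[of t] by (simp add: norm_exp_i_times)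
  qed
  show ?thesis
  proof (rule measure_eqI)
    show "sets (distr M (PiM I (\<lambda>_. lborel :: real measure)) V) = sets G" using sG by simp
    fix A assume "A \<in> sets (distr M (PiM I (\<lambda>_. lborel :: real measure)) V)"
    then have A: "A \<in> sets L" unfolding L_def by simp
    have im: "(\<lambda>x. indicator A x :: complex) \<in> borel_measurable L" using A by auto
    have "(\<integral>w. indicator A (V w) \<partial>M) - (\<integral>x. indicator A x \<partial>G) = (0::complex)"
    proof -
      have "cmod (indicator A x) \<le> 1" for x by (cases "x \<in> A") auto
      then show ?thesis using intN[OF im] key[OF A] by simp
    qed
    moreover have "(\<integral>w. (indicator A (V w) :: complex) \<partial>M) = complex_of_real (\<integral>w. indicator A (V w) \<partial>M)"
      by (subst integral_complex_of_real[symmetric]) (intro Bochner_Integration.integral_cong refl, simp add: indicator_def)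
    moreover have "(\<integral>x. (indicator A x :: complex) \<partial>G) = complex_of_real (\<integral>x. indicator A x \<partial>G)"
      by (subst integral_complex_of_real[symmetric]) (intro Bochner_Integration.integral_cong refl, simp add: indicator_def)
    ultimately have "complex_of_real (\<integral>w. indicator A (V w) \<partial>M) = complex_of_real (\<integral>x. indicator A x \<partial>G)"
      by simp
    then have eqr: "(\<integral>w. indicator A (V w) \<partial>M) = (\<integral>x. indicator A x \<partial>G :: real)" by simp
    have AV: "V -` A \<inter> space M \<in> sets M" using A V unfolding L_def by (auto intro: measurable_sets)
    have "emeasure (distr M (PiM I (\<lambda>_. lborel :: real measure)) V) A = emeasure M (V -` A \<inter> space M)"
      using A V unfolding L_def by (subst emeasure_distr) auto
    also have "\<dots> = ennreal (\<integral>w. indicator (V -` A \<inter> space M) w \<partial>M)"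
      using AV by (simp add: M.emeasure_eq_measure)
    also have "(\<integral>w. indicator (V -` A \<inter> space M) w \<partial>M) = (\<integral>w. indicator A (V w) \<partial>M :: real)"
      by (intro Bochner_Integration.integral_cong refl) (auto simp: indicator_def)
    also have "\<dots> = (\<integral>x. indicator A x \<partial>G)" by (rule eqr)
    also have "ennreal \<dots> = emeasure G A"
      using A sG unfolding L_def by (simp add: G.emeasure_eq_measure)
    finally show "emeasure (distr M (PiM I (\<lambda>_. lborel :: real measure)) V) A = emeasure G A" .
  qed
qed


definition ons :: "(nat \<Rightarrow> 'h::real_inner) \<Rightarrow> bool" where
  "ons v \<longleftrightarrow> (\<forall>i j. v i \<bullet> v j = (if i = j then 1 else 0))"

lemma ons_inner_sum:
  assumes "ons v" "finite S"
  shows "(\<Sum>i\<in>S. a i *\<^sub>R v i) \<bullet> (\<Sum>i\<in>S. b i *\<^sub>R v i) = (\<Sum>i\<in>S. a i * b i)"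
proof -
  have "(\<Sum>i\<in>S. a i *\<^sub>R v i) \<bullet> (\<Sum>j\<in>S. b j *\<^sub>R v j) = (\<Sum>i\<in>S. a i * (v i \<bullet> (\<Sum>j\<in>S. b j *\<^sub>R v j)))"
    by (simp add: inner_sum_left)
  also have "\<dots> = (\<Sum>i\<in>S. \<Sum>j\<in>S. a i * b j * (v i \<bullet> v j))"
    by (simp add: inner_sum_right sum_distrib_left mult_ac)
  also have "\<dots> = (\<Sum>i\<in>S. \<Sum>j\<in>S. if i = j then a i * b j else 0)"
    using assms(1) unfolding ons_def by (intro sum.cong refl) auto
  also have "\<dots> = (\<Sum>i\<in>S. a i * b i)"
    using assms(2) by (simp add: sum.delta)
  finally show ?thesis .
qed

lemma ons_inner_sum1:
  assumes "ons v" "finite S"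
  shows "y \<bullet> (\<Sum>i\<in>S. b i *\<^sub>R v i) = (\<Sum>i\<in>S. b i * (y \<bullet> v i))"
  by (simp add: inner_sum_right)

lemma ons_vj_sum:
  assumes "ons v" "finite S"
  shows "v j \<bullet> (\<Sum>i\<in>S. b i *\<^sub>R v i) = (if j \<in> S then b j else 0)"
proof -
  have "v j \<bullet> (\<Sum>i\<in>S. b i *\<^sub>R v i) = (\<Sum>i\<in>S. if j = i then b i else 0)"
    using assms(1) unfolding ons_def by (simp add: inner_sum_right) (intro sum.cong refl, auto)
  also have "\<dots> = (if j \<in> S then b j else 0)" using assms(2) by (simp add: sum.delta)
  finally show ?thesis .
qed

lemma ons_norm_diff:
  assumes "ons v" "finite S"
  shows "(norm (x - (\<Sum>i\<in>S. b i *\<^sub>R v i)))\<^sup>2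
       = (norm x)\<^sup>2 - 2 * (\<Sum>i\<in>S. b i * (x \<bullet> v i)) + (\<Sum>i\<in>S. (b i)\<^sup>2)"
proof -
  let ?s = "\<Sum>i\<in>S. b i *\<^sub>R v i"
  have "(norm (x - ?s))\<^sup>2 = x \<bullet> x - 2 * (x \<bullet> ?s) + ?s \<bullet> ?s"
    by (simp add: power2_norm_eq_inner inner_diff_left inner_diff_right inner_commute)
  also have "?s \<bullet> ?s = (\<Sum>i\<in>S. (b i)\<^sup>2)" using ons_inner_sum[OF assms, of b b] by (simp add: power2_eq_square)
  also have "x \<bullet> ?s = (\<Sum>i\<in>S. b i * (x \<bullet> v i))" by (simp add: inner_sum_right)
  finally show ?thesis by (simp add: power2_norm_eq_inner)
qed

lemma bessel:
  assumes "ons v"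
  shows "(\<Sum>i<n. (x \<bullet> v i)\<^sup>2) \<le> (norm x)\<^sup>2"
  using ons_norm_diff[OF assms, of "{..<n}" x "\<lambda>i. x \<bullet> v i"]
  by (simp add: power2_eq_square) (smt (verit) zero_le_power2 power2_eq_square)

lemma bessel_summable:
  assumes "ons v"
  shows "summable (\<lambda>i. (x \<bullet> v i)\<^sup>2)"
  by (rule summableI_nonneg_bounded[where x="(norm x)\<^sup>2"]) (use bessel[OF assms] in auto)

lemma ons_sum_norm:
  assumes "ons v" "finite S"
  shows "(norm (\<Sum>i\<in>S. b i *\<^sub>R v i))\<^sup>2 = (\<Sum>i\<in>S. (b i)\<^sup>2)"
proof -
  have "(norm (\<Sum>i\<in>S. b i *\<^sub>R v i))\<^sup>2 = (\<Sum>i\<in>S. b i *\<^sub>R v i) \<bullet> (\<Sum>i\<in>S. b i *\<^sub>R v i)"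
    by (rule power2_norm_eq_inner)
  also have "\<dots> = (\<Sum>i\<in>S. b i * b i)" by (rule ons_inner_sum[OF assms])
  finally show ?thesis by (simp add: power2_eq_square)
qed

lemma ons_summable_vec:
  fixes v :: "nat \<Rightarrow> 'h::{real_inner,banach}"
  assumes "ons v" "summable (\<lambda>i. (c i)\<^sup>2)"
  shows "summable (\<lambda>i. c i *\<^sub>R v i)"
  unfolding summable_Cauchy
proof (intro allI impI)
  fix e :: real assume e: "e > 0"
  from assms(2)[unfolded summable_Cauchy, rule_format, of "e\<^sup>2"] e
  obtain N where N: "\<And>m n. m \<ge> N \<Longrightarrow> norm (\<Sum>i\<in>{m..<n}. (c i)\<^sup>2) < e\<^sup>2" by auto
  show "\<exists>N. \<forall>m\<ge>N. \<forall>n. norm (\<Sum>i\<in>{m..<n}. c i *\<^sub>R v i) < e"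
  proof (intro exI allI impI)
    fix m n assume m: "m \<ge> N"
    have "(norm (\<Sum>i\<in>{m..<n}. c i *\<^sub>R v i))\<^sup>2 = (\<Sum>i\<in>{m..<n}. (c i)\<^sup>2)"
      by (rule ons_sum_norm[OF assms(1)]) simp
    also have "\<dots> < e\<^sup>2" using N[OF m, of n] by simp
    finally show "norm (\<Sum>i\<in>{m..<n}. c i *\<^sub>R v i) < e"
      using e by (simp add: power_less_imp_less_base)
  qed
qed

definition proj :: "(nat \<Rightarrow> 'h::{real_inner,banach}) \<Rightarrow> 'h \<Rightarrow> 'h" where
  "proj v x = (\<Sum>i. (x \<bullet> v i) *\<^sub>R v i)"

lemma proj_summable:
  fixes v :: "nat \<Rightarrow> 'h::{real_inner,banach}"
  assumes "ons v" shows "summable (\<lambda>i. (x \<bullet> v i) *\<^sub>R v i)"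
  by (rule ons_summable_vec[OF assms bessel_summable[OF assms]])

lemma inner_proj:
  fixes v :: "nat \<Rightarrow> 'h::{real_inner,banach}"
  assumes "ons v"
  shows "y \<bullet> proj v x = (\<Sum>i. (x \<bullet> v i) * (y \<bullet> v i))"
proof -
  have "y \<bullet> proj v x = (\<Sum>i. y \<bullet> ((x \<bullet> v i) *\<^sub>R v i))"
    unfolding proj_def by (rule bounded_linear.suminf[OF bounded_linear_inner_right proj_summable[OF assms]])
  then show ?thesis by (simp add: mult.commute)
qed

lemma inner_proj_sums:
  fixes v :: "nat \<Rightarrow> 'h::{real_inner,banach}"
  assumes "ons v"
  shows "(\<lambda>i. (x \<bullet> v i) * (y \<bullet> v i)) sums (y \<bullet> proj v x)"
proof -
  have "(\<lambda>i. y \<bullet> ((x \<bullet> v i) *\<^sub>R v i)) sums (y \<bullet> proj v x)"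
    unfolding proj_def by (rule bounded_linear.sums[OF bounded_linear_inner_right summable_sums[OF proj_summable[OF assms]]])
  then show ?thesis by (simp add: mult.commute)
qed

lemma vj_proj:
  fixes v :: "nat \<Rightarrow> 'h::{real_inner,banach}"
  assumes "ons v"
  shows "v j \<bullet> proj v x = x \<bullet> v j"
proof -
  have "(\<lambda>i. (x \<bullet> v i) * (v j \<bullet> v i)) sums (v j \<bullet> proj v x)" by (rule inner_proj_sums[OF assms])
  moreover have "(\<lambda>i. (x \<bullet> v i) * (v j \<bullet> v i)) = (\<lambda>i. if i = j then x \<bullet> v j else 0)"
    using assms unfolding ons_def by (auto simp: fun_eq_iff)
  moreover have "(\<lambda>i. if i = j then x \<bullet> v j else 0) sums (x \<bullet> v j)" by (rule sums_single)
  ultimately show ?thesis using sums_unique2 by metis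
qed

lemma norm_proj_sums:
  fixes v :: "nat \<Rightarrow> 'h::{real_inner,banach}"
  assumes "ons v"
  shows "(\<lambda>i. (x \<bullet> v i)\<^sup>2) sums ((norm (proj v x))\<^sup>2)"
proof -
  have "(\<lambda>n. \<Sum>i<n. (x \<bullet> v i) *\<^sub>R v i) \<longlonglongrightarrow> proj v x"
    unfolding proj_def using summable_LIMSEQ[OF proj_summable[OF assms]] .
  then have "(\<lambda>n. (norm (\<Sum>i<n. (x \<bullet> v i) *\<^sub>R v i))\<^sup>2) \<longlonglongrightarrow> (norm (proj v x))\<^sup>2"
    by (intro tendsto_intros)
  moreover have "(norm (\<Sum>i<n. (x \<bullet> v i) *\<^sub>R v i))\<^sup>2 = (\<Sum>i<n. (x \<bullet> v i)\<^sup>2)" for n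
    by (rule ons_sum_norm[OF assms]) simp
  ultimately show ?thesis unfolding sums_def by simp
qed

lemma proj_eq_if_dense:
  fixes v :: "nat \<Rightarrow> 'h::{real_inner,banach}"
  assumes ons: "ons v" and dense: "\<And>X. open X \<Longrightarrow> X \<noteq> {} \<Longrightarrow> \<exists>d\<in>D. d \<in> X"
    and orth: "\<And>d. d \<in> D \<Longrightarrow> (d - proj v d) \<bullet> x = 0"
  shows "proj v x = x"
proof -
  define r where "r = x - proj v x"
  have dr: "d \<bullet> r = 0" if "d \<in> D" for d
  proof -
    have "d \<bullet> x = proj v d \<bullet> x" using orth[OF that] by (simp add: inner_diff_left)
    also have "proj v d \<bullet> x = (\<Sum>i. (d \<bullet> v i) * (x \<bullet> v i))"
      using inner_proj[OF ons, of x d] by (simp add: inner_commute)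
    also have "\<dots> = d \<bullet> proj v x" using inner_proj[OF ons, of d x] by (simp add: mult.commute)
    finally show ?thesis unfolding r_def by (simp add: inner_diff_right)
  qed
  have "norm r = 0"
  proof (rule ccontr)
    assume "norm r \<noteq> 0"
    then have rp: "norm r > 0" by simp
    define e where "e = norm r / 2"
    have "open (ball r e)" "ball r e \<noteq> {}" using rp by (auto simp: e_def)
    then obtain d where d: "d \<in> D" "d \<in> ball r e" using dense by blast
    have "(norm r)\<^sup>2 = r \<bullet> r" by (simp add: power2_norm_eq_inner)
    also have "\<dots> = (r - d) \<bullet> r" using dr[OF d(1)] by (simp add: inner_diff_left)
    also have "\<dots> \<le> norm (r - d) * norm r" by (rule norm_cauchy_schwarz)
    also have "\<dots> < e * norm r" using d(2) rp by (simp add: dist_norm)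
    finally show False using rp unfolding e_def by (simp add: power2_eq_square)
  qed
  then show ?thesis unfolding r_def by simp
qed


locale gsetup =
  fixes M :: "'w measure"
    and X :: "'w \<Rightarrow> 'h::{real_inner,banach,second_countable_topology}"
    and lam :: "nat \<Rightarrow> real" and u :: "nat \<Rightarrow> 'h"
  assumes P: "prob_space M"
    and Xm[measurable]: "X \<in> borel_measurable M"
    and Xint: "integrable M (\<lambda>w. (norm (X w))^2)"
    and Gs: "centered_gaussian M X"
    and lam_pos: "\<forall>j\<ge>1. lam j > 0"
    and lam_dec: "\<forall>j\<ge>1. lam (Suc j) \<le> lam j"
    and u_on: "\<forall>i\<ge>1. \<forall>j\<ge>1. u i \<bullet> u j = (if i = j then 1 else 0)"
    and eig: "\<forall>j\<ge>1. cov_op M X (u j) = lam j *\<^sub>R u j"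
    and all_eig: "\<forall>y. (\<forall>j\<ge>1. y \<bullet> u j = 0) \<longrightarrow> cov_op M X y = 0"
begin

interpretation prob_space M by (rule P)

lemma inner_m[measurable]: "(\<lambda>w. y \<bullet> X w) \<in> borel_measurable M"
  by measurable

lemma integrable_cov: "integrable M (\<lambda>w. (y \<bullet> X w) *\<^sub>R X w)"
proof (rule Bochner_Integration.integrable_bound[of _ "\<lambda>w. norm y * (norm (X w))^2"])
  show "integrable M (\<lambda>w. norm y * (norm (X w))^2)" using Xint by simp
  show "(\<lambda>w. (y \<bullet> X w) *\<^sub>R X w) \<in> borel_measurable M" by measurable
  show "AE w in M. norm ((y \<bullet> X w) *\<^sub>R X w) \<le> norm (norm y * (norm (X w))^2)"
  proof (rule AE_I2)
    fix w
    have "norm ((y \<bullet> X w) *\<^sub>R X w) = \<bar>y \<bullet> X w\<bar> * norm (X w)" by simp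
    also have "\<dots> \<le> (norm y * norm (X w)) * norm (X w)"
      by (intro mult_right_mono Cauchy_Schwarz_ineq2) auto
    also have "\<dots> = norm (norm y * (norm (X w))^2)" by (simp add: power2_eq_square)
    finally show "norm ((y \<bullet> X w) *\<^sub>R X w) \<le> norm (norm y * (norm (X w))^2)" .
  qed
qed

lemma integrable_prod_inner: "integrable M (\<lambda>w. (y \<bullet> X w) * (z \<bullet> X w))"
proof -
  have "integrable M (\<lambda>w. z \<bullet> ((y \<bullet> X w) *\<^sub>R X w))"
    using integrable_cov[of y] by (rule integrable_inner_right)
  then show ?thesis by (simp add: mult.commute)
qed

lemma cov_inner: "(\<integral>w. (y \<bullet> X w) * (z \<bullet> X w) \<partial>M) = z \<bullet> cov_op M X y"
proof -
  have "(\<integral>w. (y \<bullet> X w) * (z \<bullet> X w) \<partial>M) = (\<integral>w. z \<bullet> ((y \<bullet> X w) *\<^sub>R X w) \<partial>M)"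
    by (simp add: mult.commute)
  also have "\<dots> = z \<bullet> (\<integral>w. (y \<bullet> X w) *\<^sub>R X w \<partial>M)"
    using integrable_cov[of y] by (intro integral_inner_right) auto
  finally show ?thesis unfolding cov_op_def .
qed

lemma cov_u: "i \<ge> 1 \<Longrightarrow> j \<ge> 1 \<Longrightarrow> (\<integral>w. (u i \<bullet> X w) * (u j \<bullet> X w) \<partial>M) = (if i = j then lam i else 0)"
  using eig u_on by (simp add: cov_inner)

lemma second_moment_comb:
  fixes K :: "'k set" and idx :: "'k \<Rightarrow> nat"
  assumes K: "finite K" and inj: "inj_on idx K" and pos: "\<And>k. k \<in> K \<Longrightarrow> idx k \<ge> 1"
  shows "(\<integral>w. ((\<Sum>k\<in>K. b k *\<^sub>R u (idx k)) \<bullet> X w)^2 \<partial>M) = (\<Sum>k\<in>K. (b k)^2 * lam (idx k))"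
proof -
  have "(\<integral>w. ((\<Sum>k\<in>K. b k *\<^sub>R u (idx k)) \<bullet> X w)^2 \<partial>M)
      = (\<integral>w. (\<Sum>k\<in>K. \<Sum>k'\<in>K. b k * b k' * ((u (idx k) \<bullet> X w) * (u (idx k') \<bullet> X w))) \<partial>M)"
    by (simp add: inner_sum_left power2_eq_square sum_product mult_ac)
  also have "\<dots> = (\<Sum>k\<in>K. \<Sum>k'\<in>K. b k * b k' * (\<integral>w. (u (idx k) \<bullet> X w) * (u (idx k') \<bullet> X w) \<partial>M))"
    by (simp add: integrable_prod_inner Bochner_Integration.integral_sum)
  also have "\<dots> = (\<Sum>k\<in>K. \<Sum>k'\<in>K. if k = k' then b k * b k' * lam (idx k) else 0)"
  proof (intro sum.cong refl)
    fix k k' assume "k \<in> K" "k' \<in> K"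
    then show "b k * b k' * (\<integral>w. (u (idx k) \<bullet> X w) * (u (idx k') \<bullet> X w) \<partial>M)
        = (if k = k' then b k * b k' * lam (idx k) else 0)"
      using inj pos by (auto simp: cov_u inj_on_def)
  qed
  also have "\<dots> = (\<Sum>k\<in>K. (b k)^2 * lam (idx k))"
    using K by (simp add: sum.delta power2_eq_square)
  finally show ?thesis .
qed

lemma char_gauss: "(\<integral>w. iexp (y \<bullet> X w) \<partial>M) = complex_of_real (exp (- (\<integral>w. (y \<bullet> X w)^2 \<partial>M) / 2))"
proof -
  from Gs[unfolded centered_gaussian_def, rule_format, of y]
  consider (n) \<sigma> where "\<sigma> > 0" "distributed M lborel (\<lambda>w. y \<bullet> X w) (\<lambda>x. ennreal (normal_density 0 \<sigma> x))"
    | (z) "AE w in M. y \<bullet> X w = 0" by blast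
  then show ?thesis
  proof cases
    case z
    have "(\<integral>w. iexp (y \<bullet> X w) \<partial>M) = (\<integral>w. 1 \<partial>M)"
      by (rule integral_cong_AE) (use z in auto)
    moreover have "(\<integral>w. (y \<bullet> X w)^2 \<partial>M) = (\<integral>w. 0 \<partial>M)"
      by (rule integral_cong_AE) (use z in auto)
    ultimately show ?thesis by (simp add: prob_space)
  next
    case n
    note D = n(2)
    have sp: "\<sigma> > 0" by (rule n(1))
    have var: "variance (\<lambda>w. y \<bullet> X w) = \<sigma>^2" by (rule normal_distributed_variance[OF sp D])
    have ex: "expectation (\<lambda>w. y \<bullet> X w) = 0" by (rule normal_distributed_expectation[OF sp D])
    have sm: "(\<integral>w. (y \<bullet> X w)^2 \<partial>M) = \<sigma>^2" using var ex by simp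
    have S: "distributed M lborel (\<lambda>w. ((y \<bullet> X w) - 0) / \<sigma>) std_normal_density"
      using normal_standard_normal_convert[OF sp] D by simp
    then have dS: "distr M lborel (\<lambda>w. (y \<bullet> X w) / \<sigma>) = std_normal_distribution"
      by (simp add: distributed_def)
    have Sm: "(\<lambda>w. (y \<bullet> X w) / \<sigma>) \<in> borel_measurable M" by measurable
    have "(\<integral>w. iexp (y \<bullet> X w) \<partial>M) = (\<integral>w. iexp (\<sigma> * ((y \<bullet> X w) / \<sigma>)) \<partial>M)"
      using sp by simp
    also have "\<dots> = (\<integral>x. iexp (\<sigma> * x) \<partial>distr M lborel (\<lambda>w. (y \<bullet> X w) / \<sigma>))"
      by (subst integral_distr) (use Sm in auto)
    also have "\<dots> = char std_normal_distribution \<sigma>"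
      unfolding char_def dS ..
    also have "\<dots> = complex_of_real (exp (- (\<sigma>^2) / 2))"
      by (simp add: char_std_normal_distribution)
    finally show ?thesis using sm by simp
  qed
qed

end


context gsetup begin

interpretation prob_space M by (rule P)

lemma ons_v: "ons (\<lambda>i. u (Suc i))"
  using u_on unfolding ons_def by auto

lemma ae_expansion: "AE w in M. (\<lambda>i. (X w \<bullet> u (Suc i))^2) sums (norm (X w))^2"
proof -
  define v where "v i = u (Suc i)" for i
  have ons: "ons v" unfolding v_def by (rule ons_v)
  obtain D :: "'h set" where D: "countable D" "\<And>X. open X \<Longrightarrow> X \<noteq> {} \<Longrightarrow> \<exists>d\<in>D. d \<in> X"
    using countable_dense_exists by blast
  have ae_d: "AE w in M. (d - proj v d) \<bullet> X w = 0" for d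
  proof -
    define r where "r = d - proj v d"
    have ru: "r \<bullet> u j = 0" if "j \<ge> 1" for j
    proof -
      have j: "u j = v (j - 1)" using that unfolding v_def by simp
      show ?thesis unfolding r_def j
        using vj_proj[OF ons, of "j - 1" d] by (simp add: inner_diff_left inner_commute)
    qed
    have c0: "cov_op M X r = 0" using all_eig ru by blast
    have "(\<integral>w. (r \<bullet> X w) * (r \<bullet> X w) \<partial>M) = 0" using cov_inner[of r r] c0 by simp
    then have "AE w in M. (r \<bullet> X w) * (r \<bullet> X w) = 0"
      by (subst (asm) integral_nonneg_eq_0_iff_AE) (auto simp: integrable_prod_inner)
    then show ?thesis unfolding r_def by (auto elim: AE_mp)
  qed
  have "AE w in M. \<forall>d\<in>D. (d - proj v d) \<bullet> X w = 0"
    using D(1) ae_d by (subst AE_ball_countable) auto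
  then show ?thesis
  proof (rule AE_mp, intro AE_I2 impI)
    fix w assume "\<forall>d\<in>D. (d - proj v d) \<bullet> X w = 0"
    then have "proj v (X w) = X w" by (intro proj_eq_if_dense[OF ons D(2)]) auto
    then show "(\<lambda>i. (X w \<bullet> u (Suc i))^2) sums (norm (X w))^2"
      using norm_proj_sums[OF ons, of "X w"] unfolding v_def by simp
  qed
qed

lemma block_law:
  fixes idx :: "nat \<Rightarrow> nat" and l :: nat
  assumes inj: "inj_on idx {..<l}" and pos: "\<And>k. k < l \<Longrightarrow> idx k \<ge> 1"
  shows "distr M (borel_l l) (\<lambda>w. restrict (\<lambda>k. (u (idx k) \<bullet> X w) / sqrt (lam (idx k))) {..<l}) = std_gauss_l l"
  unfolding borel_l_def std_gauss_l_def
proof (rule law_eq_via_char[OF finite_lessThan P])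
  show "prob_space (PiM {..<l} (\<lambda>_. density lborel (\<lambda>x. ennreal (std_normal_density x))))"
    by (intro prob_space_PiM prob_space_normal_density) auto
  show "(\<lambda>w. restrict (\<lambda>k. (u (idx k) \<bullet> X w) / sqrt (lam (idx k))) {..<l}) \<in> M \<rightarrow>\<^sub>M PiM {..<l} (\<lambda>_. lborel)"
    by (rule measurable_restrict) simp
  show "sets (PiM {..<l} (\<lambda>_. density lborel (\<lambda>x. ennreal (std_normal_density x)))) = sets (PiM {..<l} (\<lambda>_. lborel))"
    by (rule sets_PiM_cong) auto
  fix t :: "nat \<Rightarrow> real"
  define y where "y = (\<Sum>k<l. (t k / sqrt (lam (idx k))) *\<^sub>R u (idx k))"
  have lp: "lam (idx k) > 0" if "k < l" for k using lam_pos pos[OF that] by auto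
  have sy: "(\<Sum>k<l. t k * restrict (\<lambda>k. (u (idx k) \<bullet> X w) / sqrt (lam (idx k))) {..<l} k) = y \<bullet> X w" for w
    unfolding y_def by (simp add: inner_sum_left)
  have m2: "(\<integral>w. (y \<bullet> X w)^2 \<partial>M) = (\<Sum>k<l. (t k)^2)"
  proof -
    have "(\<integral>w. (y \<bullet> X w)^2 \<partial>M) = (\<Sum>k<l. (t k / sqrt (lam (idx k)))^2 * lam (idx k))"
      unfolding y_def by (rule second_moment_comb) (use inj pos in auto)
    also have "\<dots> = (\<Sum>k<l. (t k)^2)"
    proof (intro sum.cong refl)
      fix k assume "k \<in> {..<l}"
      then have "lam (idx k) > 0" using lp by auto
      then show "(t k / sqrt (lam (idx k)))^2 * lam (idx k) = (t k)^2"
        by (simp add: power_divide)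
    qed
    finally show ?thesis .
  qed
  have lhs: "(\<integral>w. iexp (\<Sum>k<l. t k * restrict (\<lambda>k. (u (idx k) \<bullet> X w) / sqrt (lam (idx k))) {..<l} k) \<partial>M)
      = complex_of_real (exp (- (\<Sum>k<l. (t k)^2) / 2))"
    unfolding sy using char_gauss[of y] m2 by simp
  have psf: "product_sigma_finite (\<lambda>_::nat. std_normal_distribution)"
    unfolding product_sigma_finite_def
    by (intro allI prob_space_imp_sigma_finite prob_space_normal_density) simp
  have ints: "integrable std_normal_distribution (\<lambda>x. iexp (t k * x))" for k
  proof -
    interpret SN: prob_space std_normal_distribution by (rule prob_space_normal_density) simp
    show ?thesis by (rule SN.integrable_const_bound[where B=1]) (auto simp: norm_exp_i_times)
  qed
  have "(\<integral>x. iexp (\<Sum>k<l. t k * x k) \<partial>PiM {..<l} (\<lambda>_. std_normal_distribution))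
      = (\<integral>x. (\<Prod>k<l. iexp (t k * x k)) \<partial>PiM {..<l} (\<lambda>_. std_normal_distribution))"
    by (simp add: sum_distrib_left exp_sum)
  also have "\<dots> = (\<Prod>k<l. \<integral>x. iexp (t k * x) \<partial>std_normal_distribution)"
    by (rule product_sigma_finite.product_integral_prod[OF psf finite_lessThan ints])
  also have "\<dots> = (\<Prod>k<l. complex_of_real (exp (- ((t k)^2) / 2)))"
    using char_std_normal_distribution unfolding char_def by (simp add: fun_eq_iff)
  also have "\<dots> = complex_of_real (\<Prod>k<l. exp (- ((t k)^2) / 2))"
    by (simp only: of_real_prod)
  also have "\<dots> = complex_of_real (exp (\<Sum>k<l. - ((t k)^2) / 2))"
    by (simp add: exp_sum)
  also have "(\<Sum>k<l. - ((t k)^2) / 2) = - (\<Sum>k<l. (t k)^2) / 2"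
    by (simp add: sum_negf sum_divide_distrib)
  finally show "(\<integral>w. iexp (\<Sum>k<l. t k * restrict (\<lambda>k. (u (idx k) \<bullet> X w) / sqrt (lam (idx k))) {..<l} k) \<partial>M)
      = (\<integral>x. iexp (\<Sum>k<l. t k * x k) \<partial>PiM {..<l} (\<lambda>_. density lborel (\<lambda>x. ennreal (std_normal_density x))))"
    using lhs by simp
qed

end


lemma sum_blocks:
  fixes F :: "nat \<Rightarrow> nat \<Rightarrow> 'a::comm_monoid_add"
  shows "(\<Sum>j\<in>{1..m}. \<Sum>k<l. F j k) = (\<Sum>i<m*l. F (i div l + 1) (i mod l))"
proof (induction m)
  case 0 then show ?case by simp
next
  case (Suc m)
  have "(\<Sum>j\<in>{1..Suc m}. \<Sum>k<l. F j k) = (\<Sum>j\<in>{1..m}. \<Sum>k<l. F j k) + (\<Sum>k<l. F (Suc m) k)"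
    by (simp add: sum.cl_ivl_Suc)
  also have "(\<Sum>k<l. F (Suc m) k) = (\<Sum>i\<in>{m*l..<m*l+l}. F (i div l + 1) (i mod l))"
  proof -
    have "(\<Sum>i\<in>{m*l..<m*l+l}. F (i div l + 1) (i mod l)) = (\<Sum>i\<in>{0+m*l..<l+m*l}. F (i div l + 1) (i mod l))"
      by (simp add: add.commute)
    also have "\<dots> = (\<Sum>k\<in>{0..<l}. F ((k + m*l) div l + 1) ((k + m*l) mod l))"
      by (rule sum.shift_bounds_nat_ivl)
    also have "\<dots> = (\<Sum>k<l. F (Suc m) k)"
      by (intro sum.cong) auto
    finally show ?thesis by simp
  qed
  finally have e: "(\<Sum>j\<in>{1..Suc m}. \<Sum>k<l. F j k) = (\<Sum>j\<in>{1..m}. \<Sum>k<l. F j k) + (\<Sum>i\<in>{m*l..<m*l+l}. F (i div l + 1) (i mod l))" .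
  have "(\<Sum>i<m*l. F (i div l + 1) (i mod l)) + (\<Sum>i\<in>{m*l..<m*l+l}. F (i div l + 1) (i mod l))
      = (\<Sum>i<Suc m * l. F (i div l + 1) (i mod l))"
    by (simp add: lessThan_atLeast0 sum.atLeastLessThan_concat add.commute)
  then show ?case using Suc.IH e by simp
qed

lemma sqdist_meas: "(\<lambda>x. sqdist_l l x a) \<in> borel_measurable (borel_l l)"
  unfolding sqdist_l_def borel_l_def
proof (intro borel_measurable_sum borel_measurable_power borel_measurable_diff borel_measurable_const)
  fix k assume "k \<in> {..<l}"
  then show "(\<lambda>x. x k) \<in> borel_measurable (PiM {..<l} (\<lambda>_. lborel))"
    using measurable_component_singleton[of k "{..<l}" "\<lambda>_. lborel :: real measure"] by simp
qed

lemma mindist_meas: "finite \<alpha> \<Longrightarrow> mindist_l l \<alpha> \<in> borel_measurable (borel_l l)"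
  unfolding mindist_l_def
  by (intro borel_measurable_INF countable_finite measurable_compose[OF sqdist_meas] measurable_ennreal) auto

lemma vor_quant:
  assumes vor: "voronoi_partition l \<alpha> C" and fin: "finite \<alpha>" and y: "y \<in> space (borel_l l)"
  shows "ennreal (sqdist_l l y (voronoi_quant \<alpha> C y)) = mindist_l l \<alpha> y"
proof -
  from vor have cov: "(\<Union>b\<in>\<alpha>. C b) = space (borel_l l)" and disj: "disjoint_family_on C \<alpha>"
    and cell: "\<forall>b\<in>\<alpha>. C b \<subseteq> {x. \<forall>c\<in>\<alpha>. sqdist_l l x b \<le> sqdist_l l x c}"
    unfolding voronoi_partition_def by auto
  from cov y obtain b where b: "b \<in> \<alpha>" "y \<in> C b" by blast
  have ind: "indicator (C b') y = (if b' = b then 1 else 0 :: real)" if "b' \<in> \<alpha>" for b'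
  proof (cases "b' = b")
    case True then show ?thesis using b by simp
  next
    case False
    then have "C b' \<inter> C b = {}" using disj that b(1) unfolding disjoint_family_on_def by blast
    then have "y \<notin> C b'" using b by blast
    then show ?thesis using False by simp
  qed
  have vq: "voronoi_quant \<alpha> C y = b"
  proof
    fix k
    have "voronoi_quant \<alpha> C y k = (\<Sum>b'\<in>\<alpha>. (if b' = b then b k else 0))"
      unfolding voronoi_quant_def by (intro sum.cong refl) (simp add: ind)
    also have "\<dots> = b k" using fin b(1) by (simp add: sum.delta')
    finally show "voronoi_quant \<alpha> C y k = b k" .
  qed
  have le: "sqdist_l l y b \<le> sqdist_l l y c" if "c \<in> \<alpha>" for c
    using cell b that by blast
  have "mindist_l l \<alpha> y = ennreal (sqdist_l l y b)"
    unfolding mindist_l_def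
  proof (rule antisym)
    show "(INF a\<in>\<alpha>. ennreal (sqdist_l l y a)) \<le> ennreal (sqdist_l l y b)"
      using b(1) by (rule INF_lower)
    show "ennreal (sqdist_l l y b) \<le> (INF a\<in>\<alpha>. ennreal (sqdist_l l y a))"
      by (rule INF_greatest) (use le in \<open>auto intro: ennreal_leI\<close>)
  qed
  then show ?thesis using vq by simp
qed

context gsetup begin

lemma lam_mono: "a \<ge> 1 \<Longrightarrow> lam (a + d) \<le> lam a"
proof (induction d)
  case 0 then show ?case by simp
next
  case (Suc d)
  then have "lam (Suc (a + d)) \<le> lam (a + d)" using lam_dec by auto
  then show ?case using Suc by simp
qed

end


theorem lemma1:
  fixes M :: "'w measure"
    and X :: "'w \<Rightarrow> 'h::{real_inner,banach,second_countable_topology}"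
    and lam :: "nat \<Rightarrow> real" and u :: "nat \<Rightarrow> 'h"
    and n m l :: nat and nn :: "nat \<Rightarrow> nat"
    and \<alpha> :: "nat \<Rightarrow> (nat \<Rightarrow> real) set"
    and C :: "nat \<Rightarrow> (nat \<Rightarrow> real) \<Rightarrow> (nat \<Rightarrow> real) set"
  assumes "prob_space M"
    and "X \<in> borel_measurable M"
    and "integrable M (\<lambda>w. (norm (X w))^2)"
    and "centered_gaussian M X"
    and lam_pos: "\<forall>j\<ge>1. lam j > 0"
    and lam_dec: "\<forall>j\<ge>1. lam (Suc j) \<le> lam j"
    and u_on: "\<forall>i\<ge>1. \<forall>j\<ge>1. u i \<bullet> u j = (if i = j then 1 else 0)"
    and eig: "\<forall>j\<ge>1. cov_op M X (u j) = lam j *\<^sub>R u j"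
    and all_eig: "\<forall>y. (\<forall>j\<ge>1. y \<bullet> u j = 0) \<longrightarrow> cov_op M X y = 0"
    and "n \<ge> 1" and "m \<ge> 1" and "l \<ge> 1"
    and nn_pos: "\<forall>j\<in>{1..m}. nn j \<ge> 1"
    and prod_le: "(\<Prod>j=1..m. nn j) \<le> n"
    and opt: "\<forall>j\<in>{1..m}. L2_optimal_quantizer M l
               (\<lambda>w. restrict (\<lambda>k. (u ((j-1)*l+k+1) \<bullet> X w) / sqrt (lam ((j-1)*l+k+1))) {..<l})
               (nn j) (\<alpha> j)"
    and vor: "\<forall>j\<in>{1..m}. voronoi_partition l (\<alpha> j) (C j)"
  shows "let Zb = (\<lambda>j w. restrict (\<lambda>k. (u ((j-1)*l+k+1) \<bullet> X w) / sqrt (lam ((j-1)*l+k+1))) {..<l});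
             Xhat = (\<lambda>w. \<Sum>j=1..m. \<Sum>k<l.
                       (sqrt (lam ((j-1)*l+k+1)) * voronoi_quant (\<alpha> j) (C j) (Zb j w) k) *\<^sub>R u ((j-1)*l+k+1));
             err = (\<integral>\<^sup>+ w. ennreal ((norm (X w - Xhat w))^2) \<partial>M);
             bound = (\<Sum>j=1..m. ennreal (lam ((j-1)*l+1)) * qerr_sq (std_gauss_l l) l (\<lambda>x. x) (nn j))
                     + ennreal (\<Sum>i. lam (m*l+1+i))
         in err \<le> bound \<and>
            ((l = 1 \<or> (\<forall>j\<in>{1..m}. \<forall>k<l. lam ((j-1)*l+k+1) = lam ((j-1)*l+1))) \<longrightarrow> err = bound)"
proof -
  note asm = assms
  interpret gsetup M X lam u
    using assms(1-4) lam_pos lam_dec u_on eig all_eig by (rule gsetup.intro)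
  interpret prob_space M by (rule P)
  define Zb where "Zb = (\<lambda>j w. restrict (\<lambda>k. (u ((j-1)*l+k+1) \<bullet> X w) / sqrt (lam ((j-1)*l+k+1))) {..<l})"
  define Q where "Q = (\<lambda>j w. voronoi_quant (\<alpha> j) (C j) (Zb j w))"
  define Xhat where "Xhat = (\<lambda>w. \<Sum>j=1..m. \<Sum>k<l. (sqrt (lam ((j-1)*l+k+1)) * Q j w k) *\<^sub>R u ((j-1)*l+k+1))"
  define N where "N = m * l"
  define G where "G = std_gauss_l l"
  have l1: "l \<ge> 1" using asm by simp
  have lamS: "lam (Suc i) > 0" for i using lam_pos[rule_format, of "Suc i"] by simp
  have lam_nn: "0 \<le> lam (a + 1)" for a using lamS[of a] by simp
  have lam_nn': "0 \<le> lam (1 + a)" for a using lamS[of a] by simp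
  have finA: "finite (\<alpha> j)" if "j \<in> {1..m}" for j
    using opt that unfolding L2_optimal_quantizer_def by auto
  have Csets: "C j b \<in> sets (borel_l l)" if "j \<in> {1..m}" "b \<in> \<alpha> j" for j b
    using vor that unfolding voronoi_partition_def by auto
  have Zbm: "Zb j \<in> M \<rightarrow>\<^sub>M borel_l l" for j
    unfolding Zb_def borel_l_def by (rule measurable_restrict) simp
  have Zbk_m[measurable]: "(\<lambda>w. Zb j w k) \<in> borel_measurable M" for j k
    by (cases "k < l") (simp_all add: Zb_def)
  have Qk_m[measurable]: "(\<lambda>w. Q j w k) \<in> borel_measurable M" if "j \<in> {1..m}" for j k
    unfolding Q_def voronoi_quant_def
  proof (intro borel_measurable_sum borel_measurable_times borel_measurable_const)
    fix b assume "b \<in> \<alpha> j"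
    then show "(\<lambda>w. indicator (C j b) (Zb j w)) \<in> borel_measurable M"
      using Csets[OF that] by (intro measurable_compose[OF Zbm borel_measurable_indicator])
  qed
  have law: "distr M (borel_l l) (Zb j) = G" for j
  proof -
    have e: "Zb j = (\<lambda>w. restrict (\<lambda>k. (u ((\<lambda>k. (j-1)*l+k+1) k) \<bullet> X w) / sqrt (lam ((\<lambda>k. (j-1)*l+k+1) k))) {..<l})"
      unfolding Zb_def by simp
    have "distr M (borel_l l) (\<lambda>w. restrict (\<lambda>k. (u ((\<lambda>k. (j-1)*l+k+1) k) \<bullet> X w) / sqrt (lam ((\<lambda>k. (j-1)*l+k+1) k))) {..<l}) = G"
      unfolding G_def by (rule block_law) (auto simp: inj_on_def)
    then show ?thesis using e by simp
  qed
  have qerr_eq: "qerr_sq M l (Zb j) (nn j) = qerr_sq G l (\<lambda>x. x) (nn j)" for j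
    unfolding qerr_sq_def
  proof (intro INF_cong refl)
    fix a :: "(nat \<Rightarrow> real) set" assume "a \<in> {\<alpha>. finite \<alpha> \<and> card \<alpha> \<le> nn j}"
    then have fa: "finite a" by simp
    have "qdistortion M l (Zb j) a = (\<integral>\<^sup>+x. mindist_l l a x \<partial>distr M (borel_l l) (Zb j))"
      unfolding qdistortion_def using mindist_meas[OF fa] by (subst nn_integral_distr[OF Zbm]) simp_all
    also have "\<dots> = qdistortion G l (\<lambda>x. x) a" unfolding law qdistortion_def ..
    finally show "qdistortion M l (Zb j) a = qdistortion G l (\<lambda>x. x) a" .
  qed
  define E where "E j = (\<integral>\<^sup>+w. ennreal (sqdist_l l (Zb j w) (Q j w)) \<partial>M)" for j
  have Eq: "E j = qerr_sq G l (\<lambda>x. x) (nn j)" if j: "j \<in> {1..m}" for j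
  proof -
    have "E j = (\<integral>\<^sup>+w. mindist_l l (\<alpha> j) (Zb j w) \<partial>M)"
      unfolding E_def Q_def
      by (intro nn_integral_cong vor_quant[OF _ finA[OF j]]) (use vor j measurable_space[OF Zbm] in auto)
    also have "\<dots> = qdistortion M l (Zb j) (\<alpha> j)" unfolding qdistortion_def ..
    also have "\<dots> = qerr_sq M l (Zb j) (nn j)"
      using opt j unfolding L2_optimal_quantizer_def Zb_def by auto
    also have "\<dots> = qerr_sq G l (\<lambda>x. x) (nn j)" by (rule qerr_eq)
    finally show ?thesis .
  qed
  define S1 where "S1 j = (\<Sum>k<l. \<integral>\<^sup>+w. ennreal (lam ((j-1)*l+k+1) * (Zb j w k - Q j w k)^2) \<partial>M)" for j
  have S2: "(\<Sum>k<l. \<integral>\<^sup>+w. ennreal (lam ((j-1)*l+1) * (Zb j w k - Q j w k)^2) \<partial>M)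
      = ennreal (lam ((j-1)*l+1)) * E j" if j: "j \<in> {1..m}" for j
  proof -
    have lp: "lam ((j-1)*l+1) \<ge> 0" by (rule lam_nn)
    have "(\<Sum>k<l. \<integral>\<^sup>+w. ennreal (lam ((j-1)*l+1) * (Zb j w k - Q j w k)^2) \<partial>M)
        = (\<Sum>k<l. ennreal (lam ((j-1)*l+1)) * \<integral>\<^sup>+w. ennreal ((Zb j w k - Q j w k)^2) \<partial>M)"
      using j lp by (intro sum.cong refl) (simp add: ennreal_mult nn_integral_cmult)
    also have "\<dots> = ennreal (lam ((j-1)*l+1)) * (\<Sum>k<l. \<integral>\<^sup>+w. ennreal ((Zb j w k - Q j w k)^2) \<partial>M)"
      by (simp add: sum_distrib_left)
    also have "(\<Sum>k<l. \<integral>\<^sup>+w. ennreal ((Zb j w k - Q j w k)^2) \<partial>M)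
        = (\<integral>\<^sup>+w. (\<Sum>k<l. ennreal ((Zb j w k - Q j w k)^2)) \<partial>M)"
      using j by (intro nn_integral_sum[symmetric]) auto
    also have "\<dots> = E j"
      unfolding E_def sqdist_l_def by (intro nn_integral_cong) (simp add: sum_ennreal)
    finally show ?thesis .
  qed
  have S1le: "S1 j \<le> ennreal (lam ((j-1)*l+1)) * E j" if j: "j \<in> {1..m}" for j
  proof -
    have "S1 j \<le> (\<Sum>k<l. \<integral>\<^sup>+w. ennreal (lam ((j-1)*l+1) * (Zb j w k - Q j w k)^2) \<partial>M)"
      unfolding S1_def
    proof (intro sum_mono nn_integral_mono ennreal_leI mult_right_mono)
      fix k show "lam ((j-1)*l+k+1) \<le> lam ((j-1)*l+1)"
        using lam_mono[of "(j-1)*l+1" k] by (simp add: add.commute add.left_commute)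
    qed simp
    then show ?thesis using S2[OF j] by simp
  qed
  have S1eq: "S1 j = ennreal (lam ((j-1)*l+1)) * E j"
    if j: "j \<in> {1..m}" and c: "\<forall>k<l. lam ((j-1)*l+k+1) = lam ((j-1)*l+1)" for j
  proof -
    have "S1 j = (\<Sum>k<l. \<integral>\<^sup>+w. ennreal (lam ((j-1)*l+1) * (Zb j w k - Q j w k)^2) \<partial>M)"
      unfolding S1_def using c by (intro sum.cong refl) simp
    then show ?thesis using S2[OF j] by simp
  qed
  have mom: "(\<integral>\<^sup>+w. ennreal ((X w \<bullet> u (Suc i))^2) \<partial>M) = ennreal (lam (Suc i))" for i
  proof -
    have ii: "integrable M (\<lambda>w. (X w \<bullet> u (Suc i))^2)"
      using integrable_prod_inner[of "u (Suc i)" "u (Suc i)"] by (simp add: inner_commute power2_eq_square)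
    have "(\<integral>\<^sup>+w. ennreal ((X w \<bullet> u (Suc i))^2) \<partial>M) = ennreal (\<integral>w. (X w \<bullet> u (Suc i))^2 \<partial>M)"
      by (rule nn_integral_eq_integral[OF ii]) simp
    also have "(\<integral>w. (X w \<bullet> u (Suc i))^2 \<partial>M) = (\<integral>w. (u (Suc i) \<bullet> X w) * (u (Suc i) \<bullet> X w) \<partial>M)"
      by (simp add: inner_commute power2_eq_square)
    also have "\<dots> = lam (Suc i)" by (simp add: cov_u)
    finally show ?thesis .
  qed
  have tailint: "(\<integral>\<^sup>+w. (\<Sum>i. ennreal ((X w \<bullet> u (Suc (i + n)))^2)) \<partial>M) = (\<Sum>i. ennreal (lam (Suc (i + n))))" for n
  proof -
    have "(\<integral>\<^sup>+w. (\<Sum>i. ennreal ((X w \<bullet> u (Suc (i + n)))^2)) \<partial>M)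
        = (\<Sum>i. \<integral>\<^sup>+w. ennreal ((X w \<bullet> u (Suc (i + n)))^2) \<partial>M)"
      by (rule nn_integral_suminf) measurable
    also have "\<dots> = (\<Sum>i. ennreal (lam (Suc (i + n))))" by (simp only: mom)
    finally show ?thesis .
  qed
  have summ_lam: "summable (\<lambda>i. lam (Suc i))"
  proof (rule summable_suminf_not_top)
    show "0 \<le> lam (Suc i)" for i by (rule less_imp_le[OF lamS])
    have ae1: "AE w in M. ennreal ((norm (X w))^2) = (\<Sum>i. ennreal ((X w \<bullet> u (Suc (i + 0)))^2))"
      using ae_expansion
    proof (rule AE_mp, intro AE_I2 impI)
      fix w assume s: "(\<lambda>i. (X w \<bullet> u (Suc i))^2) sums (norm (X w))^2"
      have sm: "summable (\<lambda>i. (X w \<bullet> u (Suc i))^2)" using s by (rule sums_summable)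
      have su: "(\<Sum>i. (X w \<bullet> u (Suc i))^2) = (norm (X w))^2" using s by (rule sums_unique[symmetric])
      have "(\<Sum>i. ennreal ((X w \<bullet> u (Suc i))^2)) = ennreal (\<Sum>i. (X w \<bullet> u (Suc i))^2)"
        by (rule suminf_ennreal2[OF zero_le_power2 sm])
      then show "ennreal ((norm (X w))^2) = (\<Sum>i. ennreal ((X w \<bullet> u (Suc (i + 0)))^2))"
        unfolding su add_0_right by (rule sym)
    qed
    have "(\<integral>\<^sup>+w. ennreal ((norm (X w))^2) \<partial>M) = (\<integral>\<^sup>+w. (\<Sum>i. ennreal ((X w \<bullet> u (Suc (i + 0)))^2)) \<partial>M)"
      by (rule nn_integral_cong_AE[OF ae1])
    also have "\<dots> = (\<Sum>i. ennreal (lam (Suc (i + 0))))" by (rule tailint)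
    finally have e1: "(\<Sum>i. ennreal (lam (Suc i))) = (\<integral>\<^sup>+w. ennreal ((norm (X w))^2) \<partial>M)"
      unfolding add_0_right by (rule sym)
    have e2: "(\<integral>\<^sup>+w. ennreal ((norm (X w))^2) \<partial>M) = ennreal (\<integral>w. (norm (X w))^2 \<partial>M)"
      by (rule nn_integral_eq_integral[OF Xint]) simp
    show "(\<Sum>i. ennreal (lam (Suc i))) \<noteq> \<top>" unfolding e1 e2 by (rule ennreal_neq_top)
  qed
  have summ_tail: "summable (\<lambda>i. lam (m*l+1+i))"
  proof -
    have "summable (\<lambda>i. lam (Suc (i + N)))" using summ_lam by (subst summable_iff_shift[where k=N]) simp
    moreover have "(\<lambda>i. lam (Suc (i + N))) = (\<lambda>i. lam (m*l+1+i))" by (simp add: N_def fun_eq_iff add.commute)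
    ultimately show ?thesis by simp
  qed
  have tail: "(\<integral>\<^sup>+w. (\<Sum>i. ennreal ((X w \<bullet> u (Suc (i + N)))^2)) \<partial>M) = ennreal (\<Sum>i. lam (m*l+1+i))"
  proof -
    have "(\<integral>\<^sup>+w. (\<Sum>i. ennreal ((X w \<bullet> u (Suc (i + N)))^2)) \<partial>M) = (\<Sum>i. ennreal (lam (Suc (i + N))))"
      by (rule tailint)
    also have "(\<lambda>i. lam (Suc (i + N))) = (\<lambda>i. lam (m*l+1+i))" by (simp add: N_def fun_eq_iff add.commute)
    also have "(\<Sum>i. ennreal (lam (m*l+1+i))) = ennreal (\<Sum>i. lam (m*l+1+i))"
      using summ_tail lam_nn by (intro suminf_ennreal2) (simp_all add: add.assoc)
    finally show ?thesis .
  qed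
  have idx_eq: "((i div l + 1) - 1) * l + i mod l + 1 = Suc i" for i
    by (simp add: add.commute)
  have pw: "(norm (X w - Xhat w))^2 = (\<Sum>j=1..m. \<Sum>k<l. lam ((j-1)*l+k+1) * (Zb j w k - Q j w k)^2)
             + (\<Sum>i. (X w \<bullet> u (Suc (i + N)))^2)"
    if s: "(\<lambda>i. (X w \<bullet> u (Suc i))^2) sums (norm (X w))^2" for w
  proof -
    define c where "c i = X w \<bullet> u (Suc i)" for i
    define B where "B i = sqrt (lam (Suc i)) * Q (i div l + 1) w (i mod l)" for i
    have ons: "ons (\<lambda>i. u (Suc i))" by (rule ons_v)
    have Xh: "Xhat w = (\<Sum>i<N. B i *\<^sub>R u (Suc i))"
      unfolding Xhat_def N_def B_def
      by (subst sum_blocks) (simp only: idx_eq)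
    have nd: "(norm (X w - Xhat w))^2 = (norm (X w))^2 - 2 * (\<Sum>i<N. B i * c i) + (\<Sum>i<N. (B i)^2)"
      unfolding Xh c_def by (rule ons_norm_diff[OF ons]) simp
    have sh: "(\<lambda>i. (c (i + N))^2) sums ((norm (X w))^2 - (\<Sum>i<N. (c i)^2))"
      using s unfolding c_def by (subst sums_iff_shift) simp
    then have T: "(\<Sum>i. (X w \<bullet> u (Suc (i + N)))^2) = (norm (X w))^2 - (\<Sum>i<N. (c i)^2)"
      unfolding c_def by (simp add: sums_iff)
    have sq: "(c i - B i)^2 = lam (Suc i) * (Zb (i div l + 1) w (i mod l) - Q (i div l + 1) w (i mod l))^2"
      if i: "i < N" for i
    proof -
      have ml: "i mod l < l" using l1 by simp
      have lp: "lam (Suc i) > 0" by (rule lamS)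
      have "Zb (i div l + 1) w (i mod l) = c i / sqrt (lam (Suc i))"
        unfolding Zb_def c_def using ml by (simp only: restrict_apply' lessThan_iff idx_eq inner_commute)
      then have "c i - B i = sqrt (lam (Suc i)) * (Zb (i div l + 1) w (i mod l) - Q (i div l + 1) w (i mod l))"
        unfolding B_def using lp by (simp add: field_simps)
      then show ?thesis using lp by (simp add: power_mult_distrib)
    qed
    have "(norm (X w - Xhat w))^2 = (\<Sum>i<N. (c i - B i)^2) + ((norm (X w))^2 - (\<Sum>i<N. (c i)^2))"
      unfolding nd by (simp add: power2_diff sum.distrib sum_subtractf sum_distrib_left mult_ac)
    also have "(\<Sum>i<N. (c i - B i)^2) = (\<Sum>i<N. lam (Suc i) * (Zb (i div l + 1) w (i mod l) - Q (i div l + 1) w (i mod l))^2)"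
      by (intro sum.cong refl) (simp add: sq)
    also have "\<dots> = (\<Sum>j=1..m. \<Sum>k<l. lam ((j-1)*l+k+1) * (Zb j w k - Q j w k)^2)"
      unfolding N_def by (subst sum_blocks) (simp only: idx_eq)
    finally show ?thesis using T by simp
  qed
  define A where "A w = (\<Sum>j=1..m. \<Sum>k<l. lam ((j-1)*l+k+1) * (Zb j w k - Q j w k)^2)" for w
  have Anonneg: "A w \<ge> 0" for w
    unfolding A_def by (intro sum_nonneg mult_nonneg_nonneg lam_nn zero_le_power2)
  have err_eq: "(\<integral>\<^sup>+w. ennreal ((norm (X w - Xhat w))^2) \<partial>M)
      = (\<Sum>j=1..m. S1 j) + ennreal (\<Sum>i. lam (m*l+1+i))"
  proof -
    have "(\<integral>\<^sup>+w. ennreal ((norm (X w - Xhat w))^2) \<partial>M)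
        = (\<integral>\<^sup>+w. ennreal (A w) + (\<Sum>i. ennreal ((X w \<bullet> u (Suc (i + N)))^2)) \<partial>M)"
    proof (rule nn_integral_cong_AE)
      show "AE w in M. ennreal ((norm (X w - Xhat w))^2) = ennreal (A w) + (\<Sum>i. ennreal ((X w \<bullet> u (Suc (i + N)))^2))"
        using ae_expansion
      proof (rule AE_mp, intro AE_I2 impI)
        fix w assume s: "(\<lambda>i. (X w \<bullet> u (Suc i))^2) sums (norm (X w))^2"
        have sm: "summable (\<lambda>i. (X w \<bullet> u (Suc (i + N)))^2)"
          using s by (subst summable_iff_shift[where k=N]) (simp add: sums_iff)
        have "ennreal ((norm (X w - Xhat w))^2) = ennreal (A w + (\<Sum>i. (X w \<bullet> u (Suc (i + N)))^2))"
          using pw[OF s] unfolding A_def by simp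
        also have "\<dots> = ennreal (A w) + ennreal (\<Sum>i. (X w \<bullet> u (Suc (i + N)))^2)"
          using Anonneg by (intro ennreal_plus) (auto intro: suminf_nonneg sm)
        also have "ennreal (\<Sum>i. (X w \<bullet> u (Suc (i + N)))^2) = (\<Sum>i. ennreal ((X w \<bullet> u (Suc (i + N)))^2))"
          using sm by (intro suminf_ennreal2[symmetric]) auto
        finally show "ennreal ((norm (X w - Xhat w))^2) = ennreal (A w) + (\<Sum>i. ennreal ((X w \<bullet> u (Suc (i + N)))^2))" .
      qed
    qed
    also have "\<dots> = (\<integral>\<^sup>+w. ennreal (A w) \<partial>M) + (\<integral>\<^sup>+w. (\<Sum>i. ennreal ((X w \<bullet> u (Suc (i + N)))^2)) \<partial>M)"
      unfolding A_def by (intro nn_integral_add) auto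
    also have "(\<integral>\<^sup>+w. ennreal (A w) \<partial>M) = (\<Sum>j=1..m. S1 j)"
    proof -
      have "(\<integral>\<^sup>+w. ennreal (A w) \<partial>M) = (\<integral>\<^sup>+w. (\<Sum>j=1..m. \<Sum>k<l. ennreal (lam ((j-1)*l+k+1) * (Zb j w k - Q j w k)^2)) \<partial>M)"
        unfolding A_def
      proof (intro nn_integral_cong)
        fix w
        have f0: "0 \<le> lam ((j-1)*l+k+1) * (Zb j w k - Q j w k)^2" for j k
          by (intro mult_nonneg_nonneg lam_nn zero_le_power2)
        have "ennreal (\<Sum>j=1..m. \<Sum>k<l. lam ((j-1)*l+k+1) * (Zb j w k - Q j w k)^2)
            = (\<Sum>j=1..m. ennreal (\<Sum>k<l. lam ((j-1)*l+k+1) * (Zb j w k - Q j w k)^2))"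
          by (rule sum_ennreal[symmetric]) (intro sum_nonneg f0)
        also have "\<dots> = (\<Sum>j=1..m. \<Sum>k<l. ennreal (lam ((j-1)*l+k+1) * (Zb j w k - Q j w k)^2))"
          by (intro sum.cong refl sum_ennreal[symmetric] f0)
        finally show "ennreal (\<Sum>j=1..m. \<Sum>k<l. lam ((j-1)*l+k+1) * (Zb j w k - Q j w k)^2)
            = (\<Sum>j=1..m. \<Sum>k<l. ennreal (lam ((j-1)*l+k+1) * (Zb j w k - Q j w k)^2))" .
      qed
      also have "\<dots> = (\<Sum>j=1..m. \<integral>\<^sup>+w. (\<Sum>k<l. ennreal (lam ((j-1)*l+k+1) * (Zb j w k - Q j w k)^2)) \<partial>M)"
        by (intro nn_integral_sum) auto
      also have "\<dots> = (\<Sum>j=1..m. S1 j)"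
        unfolding S1_def by (intro sum.cong refl nn_integral_sum) auto
      finally show ?thesis .
    qed
    finally show ?thesis using tail by simp
  qed
  have eq_err: "(\<integral>\<^sup>+w. ennreal ((norm (X w - Xhat w))^2) \<partial>M)
      \<le> (\<Sum>j=1..m. ennreal (lam ((j-1)*l+1)) * qerr_sq G l (\<lambda>x. x) (nn j)) + ennreal (\<Sum>i. lam (m*l+1+i))
    \<and> ((l = 1 \<or> (\<forall>j\<in>{1..m}. \<forall>k<l. lam ((j-1)*l+k+1) = lam ((j-1)*l+1))) \<longrightarrow>
       (\<integral>\<^sup>+w. ennreal ((norm (X w - Xhat w))^2) \<partial>M)
      = (\<Sum>j=1..m. ennreal (lam ((j-1)*l+1)) * qerr_sq G l (\<lambda>x. x) (nn j)) + ennreal (\<Sum>i. lam (m*l+1+i)))"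
  proof (intro conjI impI)
    show "(\<integral>\<^sup>+w. ennreal ((norm (X w - Xhat w))^2) \<partial>M)
      \<le> (\<Sum>j=1..m. ennreal (lam ((j-1)*l+1)) * qerr_sq G l (\<lambda>x. x) (nn j)) + ennreal (\<Sum>i. lam (m*l+1+i))"
      unfolding err_eq
    proof (intro add_right_mono sum_mono)
      fix j assume j: "j \<in> {1..m}"
      show "S1 j \<le> ennreal (lam ((j-1)*l+1)) * qerr_sq G l (\<lambda>x. x) (nn j)"
        using S1le[OF j] unfolding Eq[OF j] .
    qed
    assume cnd: "l = 1 \<or> (\<forall>j\<in>{1..m}. \<forall>k<l. lam ((j-1)*l+k+1) = lam ((j-1)*l+1))"
    have c2: "\<forall>k<l. lam ((j-1)*l+k+1) = lam ((j-1)*l+1)" if "j \<in> {1..m}" for j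
      using cnd that by auto
    show "(\<integral>\<^sup>+w. ennreal ((norm (X w - Xhat w))^2) \<partial>M)
      = (\<Sum>j=1..m. ennreal (lam ((j-1)*l+1)) * qerr_sq G l (\<lambda>x. x) (nn j)) + ennreal (\<Sum>i. lam (m*l+1+i))"
      unfolding err_eq
    proof (intro arg_cong2[where f="(+)"] sum.cong refl)
      fix j assume j: "j \<in> {1..m}"
      show "S1 j = ennreal (lam ((j-1)*l+1)) * qerr_sq G l (\<lambda>x. x) (nn j)"
        using S1eq[OF j c2[OF j]] unfolding Eq[OF j] .
    qed
  qed
  show ?thesis
    unfolding Let_def using eq_err unfolding Xhat_def Q_def Zb_def G_def .
qed


end
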